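(* Let $\mathcal C$ be a Clifford circuit with $m$ measurements and let $\mathcal C'$ be the circuit obtained from $\mathcal C$ by replacing the measured operator $S_j$ by $-S_j$ for every $j$ such that, when the Outcome-Code Algorithm is run on $\mathcal C$, the measurement of $S_j$ falls in case (a) with $-S_j\in\langle\mathcal S\rangle$ (i.e. $\epsilon=-1$). Then the outcome code $\mathcal O(\mathcal C')$ of $\mathcal C'$ is a linear subspace of $\mathbb Z_2^m$.
   Context: A Clifford circuit $\mathcal C$ on $n$ qubits is a finite sequence $(C_1,\dots,C_s)$ of operations, each either a unitary Clifford gate or the measurement of a Hermitian $n$-qubit Pauli operator. Each $C_i$ has a level in $\{1,2,\dots\}$; operations of equal level have disjoint supports and levels are nondecreasing along the sequence. The circuit has $m$ measurements; in circuit order the $j$-th measures $S_j$. An execution produces $o\in\mathbb Z_2^m$ with $o_j=0$ for eigenvalue $+1$ and $o_j=1$ for eigenvalue $-1$. The outcome code $\mathcal O(\mathcal C)$ is the set of outcome bit-strings occurring with nonzero probability for some input state. Outcome-Code Algorithm. Maintain a list $\mathcal S$ of pairs $(T,K_T)$ ($T$ a signed Hermitian $n$-qubit Pauli, $K_T\subseteq\{1,\dots,m\}$), initially empty. Process $C_1,\dots,C_s$ in order. If $C_i$ is a unitary $U$, replace each $T$ by $UTU^{-1}$. If $C_i$ measures $S_j$: (a) if $S_j$ or $-S_j$ lies in the group $\langle\mathcal S\rangle$ generated by the $T$'s, write $\epsilon S_j=\prod_{T\in\mathcal T}T$ with $\epsilon\in\{\pm1\}$, let $K_j$ be the symmetric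 difference of the $K_T$, $T\in\mathcal T$, and record the affine check $o_j+\sum_{k\in K_j}o_k=0$ if $\epsilon=+1$, $=1$ if $\epsilon=-1$; (b) otherwise, if some $T\in\mathcal S$ anticommutes with $S_j$, replace every other anticommuting $T'$ by $(TT',K_T\triangle K_{T'})$ and remove $(T,K_T)$; then add $(S_j,\{j\})$. *)

theory Defs
  imports "Jordan_Normal_Form.Matrix" "HOL-Library.Z2"
begin

definition adj :: "complex mat \<Rightarrow> complex mat" where
  "adj U = mat (dim_col U) (dim_row U) (\<lambda>(i,j). cnj (U $$ (j,i)))"

definition unitary_on :: "nat \<Rightarrow> complex mat \<Rightarrow> bool" where
  "unitary_on n U \<longleftrightarrow> U \<in> carrier_mat (2^n) (2^n) \<and>
     U * adj U = 1\<^sub>m (2^n) \<and> adj U * U = 1\<^sub>m (2^n)"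

datatype pauli1 = PI | PX | PY | PZ

fun pauli1_entry :: "pauli1 \<Rightarrow> bool \<Rightarrow> bool \<Rightarrow> complex" where
  "pauli1_entry PI r c = (if r = c then 1 else 0)"
| "pauli1_entry PX r c = (if r \<noteq> c then 1 else 0)"
| "pauli1_entry PY r c = (if r = c then 0 else if r then \<i> else - \<i>)"
| "pauli1_entry PZ r c = (if r = c then (if r then -1 else 1) else 0)"

text \<open>Tensor product P_0 (x) ... (x) P_(n-1); qubit i corresponds to bit i of the index.\<close>
definition pauli_mat :: "nat \<Rightarrow> (nat \<Rightarrow> pauli1) \<Rightarrow> complex mat" where
  "pauli_mat n p = mat (2^n) (2^n)
     (\<lambda>(r,c). \<Prod>i<n. pauli1_entry (p i) (bit r i) (bit c i))"

definition herm_pauli :: "nat \<Rightarrow> complex mat \<Rightarrow> bool" where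
  "herm_pauli n M \<longleftrightarrow> (\<exists>s p. (s = 1 \<or> s = -1) \<and> M = s \<cdot>\<^sub>m pauli_mat n p)"

definition clifford :: "nat \<Rightarrow> complex mat \<Rightarrow> bool" where
  "clifford n U \<longleftrightarrow> unitary_on n U \<and>
     (\<forall>P. herm_pauli n P \<longrightarrow> herm_pauli n (U * P * adj U))"

datatype operation = Gate "complex mat" | Meas "complex mat"

type_synonym circuit = "operation list"

fun valid_op :: "nat \<Rightarrow> operation \<Rightarrow> bool" where
  "valid_op n (Gate U) = clifford n U"
| "valid_op n (Meas S) = herm_pauli n S"

definition valid_circuit :: "nat \<Rightarrow> circuit \<Rightarrow> bool" where
  "valid_circuit n C \<longleftrightarrow> (\<forall>c \<in> set C. valid_op n c)"

fun num_meas :: "circuit \<Rightarrow> nat" where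
  "num_meas [] = 0"
| "num_meas (Gate U # C) = num_meas C"
| "num_meas (Meas S # C) = Suc (num_meas C)"

definition proj :: "nat \<Rightarrow> complex mat \<Rightarrow> bit \<Rightarrow> complex mat" where
  "proj n S b = (1/2) \<cdot>\<^sub>m (1\<^sub>m (2^n) + (if b = 0 then S else - S))"

text \<open>Unnormalised evolution operator of the circuit for outcome string os
  (later operations multiply from the left).\<close>
fun kraus :: "nat \<Rightarrow> circuit \<Rightarrow> bit list \<Rightarrow> complex mat" where
  "kraus n [] os = 1\<^sub>m (2^n)"
| "kraus n (Gate U # C) os = kraus n C os * U"
| "kraus n (Meas S # C) [] = 0\<^sub>m (2^n) (2^n)"
| "kraus n (Meas S # C) (b # os) = kraus n C os * proj n S b"

definition sqnorm :: "complex vec \<Rightarrow> real" where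
  "sqnorm v = (\<Sum>i<dim_vec v. (cmod (v $ i))^2)"

definition unit_state :: "nat \<Rightarrow> complex vec \<Rightarrow> bool" where
  "unit_state n \<psi> \<longleftrightarrow> dim_vec \<psi> = 2^n \<and> sqnorm \<psi> = 1"

definition outcome_prob :: "nat \<Rightarrow> circuit \<Rightarrow> bit list \<Rightarrow> complex vec \<Rightarrow> real" where
  "outcome_prob n C os \<psi> = sqnorm (mult_mat_vec (kraus n C os) \<psi>)"

definition outcome_code :: "nat \<Rightarrow> circuit \<Rightarrow> bit list set" where
  "outcome_code n C = {os. length os = num_meas C \<and>
      (\<exists>\<psi>. unit_state n \<psi> \<and> outcome_prob n C os \<psi> \<noteq> 0)}"

definition is_subspace :: "nat \<Rightarrow> bit list set \<Rightarrow> bool" where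
  "is_subspace m V \<longleftrightarrow> (\<forall>v\<in>V. length v = m) \<and> replicate m 0 \<in> V \<and>
     (\<forall>u\<in>V. \<forall>v\<in>V. map2 (+) u v \<in> V) \<and>
     (\<forall>c. \<forall>v\<in>V. map ((*) c) v \<in> V)"

inductive_set gen_group :: "nat \<Rightarrow> complex mat list \<Rightarrow> complex mat set"
  for n Ts where
  one: "1\<^sub>m (2^n) \<in> gen_group n Ts"
| gen: "T \<in> set Ts \<Longrightarrow> T \<in> gen_group n Ts"
| inv: "T \<in> set Ts \<Longrightarrow> adj T \<in> gen_group n Ts"
| mult: "A \<in> gen_group n Ts \<Longrightarrow> B \<in> gen_group n Ts \<Longrightarrow> A * B \<in> gen_group n Ts"

type_synonym alg_state = "(complex mat \<times> nat set) list"

definition anticommute :: "complex mat \<Rightarrow> complex mat \<Rightarrow> bool" where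
  "anticommute A B \<longleftrightarrow> A * B = - (B * A)"

definition sub_prod :: "nat \<Rightarrow> alg_state \<Rightarrow> nat set \<Rightarrow> complex mat" where
  "sub_prod n S I = foldr (\<lambda>i M. fst (S ! i) * M) (sorted_list_of_set I) (1\<^sub>m (2^n))"

definition sub_symdiff :: "alg_state \<Rightarrow> nat set \<Rightarrow> nat set" where
  "sub_symdiff S I = foldr (\<lambda>i K. (snd (S ! i) - K) \<union> (K - snd (S ! i)))
      (sorted_list_of_set I) {}"

definition symdiff :: "nat set \<Rightarrow> nat set \<Rightarrow> nat set" where
  "symdiff A B = (A - B) \<union> (B - A)"

text \<open>Case (b) update when T = fst (S ! t) anticommutes with S_j.\<close>
definition caseb_update :: "alg_state \<Rightarrow> nat \<Rightarrow> complex mat \<Rightarrow> alg_state" where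
  "caseb_update S t Sj =
     map (\<lambda>(T',K'). if anticommute T' Sj then (fst (S ! t) * T', symdiff (snd (S ! t)) K')
                     else (T',K'))
         (take t S @ drop (Suc t) S)"

text \<open>oca n C S j S' R: running the algorithm on the operations C, starting from
  list S where the next measurement has (1-based) index j, can end in list S'
  having recorded the affine checks R. A check (j, K, eps) stands for
  o_j + sum_{k in K} o_k = 0 (eps = True, i.e. epsilon = +1) or = 1
  (eps = False, i.e. epsilon = -1). All choices of the algorithm are
  nondeterministic.\<close>
inductive oca :: "nat \<Rightarrow> circuit \<Rightarrow> alg_state \<Rightarrow> nat \<Rightarrow> alg_state
                   \<Rightarrow> (nat \<times> nat set \<times> bool) list \<Rightarrow> bool"
  for n where
  finished: "oca n [] S j S []"
| unitary: "oca n C (map (\<lambda>(T,K). (U * T * adj U, K)) S) j S' R \<Longrightarrow>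
            oca n (Gate U # C) S j S' R"
| case_a: "Sj \<in> gen_group n (map fst S) \<or> - Sj \<in> gen_group n (map fst S) \<Longrightarrow>
           I \<subseteq> {..<length S} \<Longrightarrow>
           sub_prod n S I = (if eps then Sj else - Sj) \<Longrightarrow>
           oca n C S (Suc j) S' R \<Longrightarrow>
           oca n (Meas Sj # C) S j S' ((j, sub_symdiff S I, eps) # R)"
| case_b_anti: "Sj \<notin> gen_group n (map fst S) \<Longrightarrow> - Sj \<notin> gen_group n (map fst S) \<Longrightarrow>
           t < length S \<Longrightarrow> anticommute (fst (S ! t)) Sj \<Longrightarrow>
           oca n C (caseb_update S t Sj @ [(Sj, {j})]) (Suc j) S' R \<Longrightarrow>
           oca n (Meas Sj # C) S j S' R"
| case_b_comm: "Sj \<notin> gen_group n (map fst S) \<Longrightarrow> - Sj \<notin> gen_group n (map fst S) \<Longrightarrow>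
           (\<forall>t < length S. \<not> anticommute (fst (S ! t)) Sj) \<Longrightarrow>
           oca n C (S @ [(Sj, {j})]) (Suc j) S' R \<Longrightarrow>
           oca n (Meas Sj # C) S j S' R"

text \<open>Replace the measured operator S_j by -S_j for every (1-based) measurement
  index j in F; j is the index of the next measurement.\<close>
fun flip_meas :: "nat set \<Rightarrow> nat \<Rightarrow> circuit \<Rightarrow> circuit" where
  "flip_meas F j [] = []"
| "flip_meas F j (Gate U # C) = Gate U # flip_meas F j C"
| "flip_meas F j (Meas S # C) =
     Meas (if j \<in> F then - S else S) # flip_meas F (Suc j) C"

end

theory Submission
  imports Defs
begin


lemma bit_low_add: "i < n \<Longrightarrow> bit (r + 2^n) i = bit (r::nat) i"
proof -
  assume i: "i < n"
  have d: "(2::nat)^i dvd 2^n" using i by (simp add: le_imp_power_dvd)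
  have "(r + 2^n) div 2^i = r div 2^i + 2^n div 2^i"
    using d by (rule div_plus_div_distrib_dvd_right)
  moreover have "(2::nat)^n div 2^i = 2^(n-i)" using i by (simp add: power_diff)
  moreover have "even ((2::nat)^(n-i))" using i by simp
  ultimately show ?thesis by (simp add: bit_iff_odd)
qed

lemma bit_high_add: "r < 2^n \<Longrightarrow> bit ((r::nat) + 2^n) n"
  by (simp add: bit_iff_odd)

lemma bit_high_low: "r < 2^n \<Longrightarrow> \<not> bit (r::nat) n"
  by (simp add: bit_iff_odd)

lemma sum_split_double:
  fixes g :: "nat \<Rightarrow> 'a::comm_monoid_add"
  shows "sum g {..<m+m} = sum g {..<m} + sum (\<lambda>r. g (r+m)) {..<m}"
proof -
  have "sum g {..<m+m} = sum g {0..<m} + sum g {m..<m+m}"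
    by (simp add: lessThan_atLeast0 sum.atLeastLessThan_concat)
  also have "sum g {m..<m+m} = sum (\<lambda>r. g (r+m)) {0..<m}"
    using sum.shift_bounds_nat_ivl[of g 0 m m] by simp
  finally show ?thesis by (simp add: lessThan_atLeast0)
qed

lemma sum_prod_bits:
  fixes f :: "nat \<Rightarrow> bool \<Rightarrow> complex"
  shows "(\<Sum>r<(2::nat)^n. \<Prod>i<n. f i (bit r i)) = (\<Prod>i<n. f i False + f i True)"
proof (induction n)
  case 0
  then show ?case by simp
next
  case (Suc n)
  have "(\<Sum>r<(2::nat)^Suc n. \<Prod>i<Suc n. f i (bit r i))
      = (\<Sum>r<(2::nat)^n. \<Prod>i<Suc n. f i (bit r i)) + (\<Sum>r<(2::nat)^n. \<Prod>i<Suc n. f i (bit (r+2^n) i))"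
    using sum_split_double[of "\<lambda>r. \<Prod>i<Suc n. f i (bit r i)" "2^n"] by (simp add: mult_2)
  also have "(\<Sum>r<(2::nat)^n. \<Prod>i<Suc n. f i (bit r i)) = (\<Sum>r<(2::nat)^n. (\<Prod>i<n. f i (bit r i)) * f n False)"
    by (rule sum.cong) (auto simp: bit_high_low)
  also have "(\<Sum>r<(2::nat)^n. \<Prod>i<Suc n. f i (bit (r+2^n) i)) = (\<Sum>r<(2::nat)^n. (\<Prod>i<n. f i (bit r i)) * f n True)"
  proof (rule sum.cong)
    fix r assume r: "r \<in> {..<(2::nat)^n}"
    have "(\<Prod>i<n. f i (bit (r+2^n) i)) = (\<Prod>i<n. f i (bit r i))"
      by (rule prod.cong) (use r bit_low_add in auto)
    then show "(\<Prod>i<Suc n. f i (bit (r+2^n) i)) = (\<Prod>i<n. f i (bit r i)) * f n True"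
      using r bit_high_add by simp
  qed simp
  finally show ?case by (simp add: Suc sum_distrib_right[symmetric] distrib_left)
qed

fun pmul :: "pauli1 \<Rightarrow> pauli1 \<Rightarrow> pauli1" where
  "pmul PI q = q" | "pmul PX PI = PX" | "pmul PY PI = PY" | "pmul PZ PI = PZ"
| "pmul PX PX = PI" | "pmul PX PY = PZ" | "pmul PX PZ = PY"
| "pmul PY PX = PZ" | "pmul PY PY = PI" | "pmul PY PZ = PX"
| "pmul PZ PX = PY" | "pmul PZ PY = PX" | "pmul PZ PZ = PI"

fun ph :: "pauli1 \<Rightarrow> pauli1 \<Rightarrow> complex" where
  "ph PI q = 1" | "ph PX PI = 1" | "ph PY PI = 1" | "ph PZ PI = 1"
| "ph PX PX = 1" | "ph PX PY = \<i>" | "ph PX PZ = - \<i>"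
| "ph PY PX = - \<i>" | "ph PY PY = 1" | "ph PY PZ = \<i>"
| "ph PZ PX = \<i>" | "ph PZ PY = - \<i>" | "ph PZ PZ = 1"

lemma e_mult: "pauli1_entry p r False * pauli1_entry q False c + pauli1_entry p r True * pauli1_entry q True c
   = ph p q * pauli1_entry (pmul p q) r c"
  by (cases p; cases q; cases r; cases c) simp_all

lemma pmul_comm: "pmul p q = pmul q p"
  by (cases p; cases q) simp_all

lemma ph_comm: "ph p q * ph q p = 1"
  by (cases p; cases q) simp_all

lemma ph_anti: "ph q p = ph p q \<or> ph q p = - ph p q"
  by (cases p; cases q) simp_all

lemma pmul_self: "pmul p p = PI" by (cases p) simp_all
lemma ph_self: "ph p p = 1" by (cases p) simp_all

lemma e_cnj: "cnj (pauli1_entry p r c) = pauli1_entry p c r"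
  by (cases p; cases r; cases c) simp_all

lemma pauli_mat_carrier[simp]: "pauli_mat n p \<in> carrier_mat (2^n) (2^n)"
  by (simp add: pauli_mat_def)

lemma pauli_mat_dims[simp]: "dim_row (pauli_mat n p) = 2^n" "dim_col (pauli_mat n p) = 2^n"
  by (simp_all add: pauli_mat_def)

lemma pauli_mult: "pauli_mat n p * pauli_mat n q =
   (\<Prod>i<n. ph (p i) (q i)) \<cdot>\<^sub>m pauli_mat n (\<lambda>i. pmul (p i) (q i))"
proof (rule eq_matI)
  fix r c assume r: "r < dim_row ((\<Prod>i<n. ph (p i) (q i)) \<cdot>\<^sub>m pauli_mat n (\<lambda>i. pmul (p i) (q i)))"
     and c: "c < dim_col ((\<Prod>i<n. ph (p i) (q i)) \<cdot>\<^sub>m pauli_mat n (\<lambda>i. pmul (p i) (q i)))"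
  have r': "r < 2^n" and c': "c < 2^n" using r c by auto
  have "(pauli_mat n p * pauli_mat n q) $$ (r,c) =
     (\<Sum>k<(2::nat)^n. (\<Prod>i<n. pauli1_entry (p i) (bit r i) (bit k i)) * (\<Prod>i<n. pauli1_entry (q i) (bit k i) (bit c i)))"
    using r' c' by (simp add: pauli_mat_def scalar_prod_def lessThan_atLeast0)
  also have "\<dots> = (\<Sum>k<(2::nat)^n. \<Prod>i<n. pauli1_entry (p i) (bit r i) (bit k i) * pauli1_entry (q i) (bit k i) (bit c i))"
    by (simp add: prod.distrib)
  also have "\<dots> = (\<Prod>i<n. ph (p i) (q i) * pauli1_entry (pmul (p i) (q i)) (bit r i) (bit c i))"
    by (subst sum_prod_bits) (simp add: e_mult)
  also have "\<dots> = ((\<Prod>i<n. ph (p i) (q i)) \<cdot>\<^sub>m pauli_mat n (\<lambda>i. pmul (p i) (q i))) $$ (r,c)"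
    using r' c' by (simp add: pauli_mat_def prod.distrib)
  finally show "(pauli_mat n p * pauli_mat n q) $$ (r,c) = ((\<Prod>i<n. ph (p i) (q i)) \<cdot>\<^sub>m pauli_mat n (\<lambda>i. pmul (p i) (q i))) $$ (r,c)" .
qed auto


lemma bits_eq_imp_eq:
  assumes "r < 2^n" "c < 2^n" "\<forall>i<n. bit r i = bit c i"
  shows "r = (c::nat)"
proof (rule bit_eqI)
  fix i
  show "bit r i = bit c i"
  proof (cases "i < n")
    case True then show ?thesis using assms by simp
  next
    case False
    then have "(2::nat)^n \<le> 2^i" by simp
    then have "r < 2^i" "c < 2^i" using assms by linarith+
    then have "r div 2^i = 0" "c div 2^i = 0" by (auto intro!: div_less)
    then show ?thesis by (simp add: bit_iff_odd)
  qed
qed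

lemma pauli_mat_I: "(\<forall>i<n. p i = PI) \<Longrightarrow> pauli_mat n p = 1\<^sub>m (2^n)"
proof (rule eq_matI)
  fix r c assume p: "\<forall>i<n. p i = PI" and r: "r < dim_row (1\<^sub>m (2^n) :: complex mat)" and c: "c < dim_col (1\<^sub>m (2^n) :: complex mat)"
  then have r': "r < 2^n" and c': "c < 2^n" by auto
  have "(\<Prod>i<n. pauli1_entry (p i) (bit r i) (bit c i)) = (if r = c then 1 else 0)"
  proof (cases "r = c")
    case True then show ?thesis using p by simp
  next
    case False
    then obtain i where i: "i < n" "bit r i \<noteq> bit c i" using bits_eq_imp_eq[OF r' c'] by blast
    then have "pauli1_entry (p i) (bit r i) (bit c i) = 0" using p by simp
    then show ?thesis using False i(1) by (metis (no_types, lifting) finite_lessThan lessThan_iff prod_zero)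
  qed
  then show "pauli_mat n p $$ (r, c) = 1\<^sub>m (2 ^ n) $$ (r, c)" using r' c' by (simp add: pauli_mat_def)
qed auto

lemma one_smult_mat[simp]: "(1::'a::semiring_1) \<cdot>\<^sub>m A = A"
  by (rule eq_matI) auto

lemma pauli_sq: "pauli_mat n p * pauli_mat n p = 1\<^sub>m (2^n)"
  by (simp add: pauli_mult ph_self pmul_self pauli_mat_I)

lemma one_mat_nz: "(1\<^sub>m (2^n) :: complex mat) \<noteq> 0\<^sub>m (2^n) (2^n)"
proof
  assume "(1\<^sub>m (2^n) :: complex mat) = 0\<^sub>m (2^n) (2^n)"
  then have "(1\<^sub>m (2^n) :: complex mat) $$ (0,0) = 0\<^sub>m (2^n) (2^n) $$ (0,0)" by simp
  then show False by simp
qed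

lemma pauli_nz: "pauli_mat n p \<noteq> 0\<^sub>m (2^n) (2^n)"
proof
  assume "pauli_mat n p = 0\<^sub>m (2^n) (2^n)"
  then have "pauli_mat n p * pauli_mat n p = 0\<^sub>m (2^n) (2^n)" by simp
  then show False using pauli_sq one_mat_nz by metis
qed

lemma pauli_adj: "adj (pauli_mat n p) = pauli_mat n p"
proof (rule eq_matI)
  fix r c assume "r < dim_row (pauli_mat n p)" "c < dim_col (pauli_mat n p)"
  then show "adj (pauli_mat n p) $$ (r, c) = pauli_mat n p $$ (r, c)"
    by (simp add: adj_def pauli_mat_def e_cnj)
qed (auto simp: adj_def)

definition mtr :: "complex mat \<Rightarrow> complex" where
  "mtr A = (\<Sum>i<dim_row A. A $$ (i,i))"

lemma pauli_trace: "i < n \<Longrightarrow> p i \<noteq> PI \<Longrightarrow> mtr (pauli_mat n p) = 0"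
proof -
  assume i: "i < n" "p i \<noteq> PI"
  have "mtr (pauli_mat n p) = (\<Sum>r<(2::nat)^n. \<Prod>j<n. pauli1_entry (p j) (bit r j) (bit r j))"
    by (simp add: mtr_def pauli_mat_def)
  also have "\<dots> = (\<Prod>j<n. pauli1_entry (p j) False False + pauli1_entry (p j) True True)"
    by (rule sum_prod_bits)
  also have "\<dots> = 0"
  proof -
    have "pauli1_entry (p i) False False + pauli1_entry (p i) True True = 0" using i by (cases "p i") auto
    then show ?thesis using i(1) by (metis (no_types, lifting) finite_lessThan lessThan_iff prod_zero)
  qed
  finally show ?thesis .
qed


lemma smult_smult_mat: "a \<cdot>\<^sub>m (b \<cdot>\<^sub>m A) = (a * b :: 'a::semigroup_mult) \<cdot>\<^sub>m A"
  by (rule eq_matI) (auto simp: mult.assoc)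

lemma uminus_smult_mat: "- A = (-1 :: 'a::ring_1) \<cdot>\<^sub>m A"
  by (rule eq_matI) auto

lemma smult_mult_smult:
  assumes "A \<in> carrier_mat N N" "B \<in> carrier_mat N N"
  shows "(a \<cdot>\<^sub>m A) * (b \<cdot>\<^sub>m B) = (a * b :: 'a::comm_ring_1) \<cdot>\<^sub>m (A * B)"
proof -
  have "(a \<cdot>\<^sub>m A) * (b \<cdot>\<^sub>m B) = a \<cdot>\<^sub>m (A * (b \<cdot>\<^sub>m B))"
    using assms by (intro mult_smult_assoc_mat) auto
  also have "A * (b \<cdot>\<^sub>m B) = b \<cdot>\<^sub>m (A * B)"
    using assms by (intro mult_smult_distrib) auto
  finally show ?thesis by (simp add: smult_smult_mat)
qed

lemma smult_cancel_pauli: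
  assumes "a \<cdot>\<^sub>m pauli_mat n p = b \<cdot>\<^sub>m pauli_mat n p"
  shows "a = b"
proof -
  have "(a \<cdot>\<^sub>m pauli_mat n p) * pauli_mat n p = (b \<cdot>\<^sub>m pauli_mat n p) * pauli_mat n p" using assms by simp
  then have "a \<cdot>\<^sub>m 1\<^sub>m (2^n) = b \<cdot>\<^sub>m (1\<^sub>m (2^n) :: complex mat)"
    by (simp add: mult_smult_assoc_mat[OF pauli_mat_carrier pauli_mat_carrier] pauli_sq)
  then have "(a \<cdot>\<^sub>m 1\<^sub>m (2^n)) $$ (0,0) = (b \<cdot>\<^sub>m (1\<^sub>m (2^n) :: complex mat)) $$ (0,0)" by simp
  then show ?thesis by simp
qed

lemma prod_ph_anti: "(\<Prod>i<(n::nat). ph (q i) (p i)) = (\<Prod>i<n. ph (p i) (q i)) \<or> (\<Prod>i<n. ph (q i) (p i)) = - (\<Prod>i<n. ph (p i) (q i))"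
proof (induction n)
  case 0 then show ?case by simp
next
  case (Suc n)
  from ph_anti[of "p n" "q n"] Suc show ?case by (auto simp: algebra_simps)
qed

lemma prod_ph_comm: "(\<Prod>i<(n::nat). ph (p i) (q i)) * (\<Prod>i<n. ph (q i) (p i)) = 1"
  by (simp add: prod.distrib[symmetric] ph_comm)

lemma herm_carrier: "herm_pauli n A \<Longrightarrow> A \<in> carrier_mat (2^n) (2^n)"
  by (auto simp: herm_pauli_def)

lemma herm_sq: "herm_pauli n A \<Longrightarrow> A * A = 1\<^sub>m (2^n)"
  by (auto simp: herm_pauli_def smult_mult_smult[OF pauli_mat_carrier pauli_mat_carrier] pauli_sq)

lemma herm_adj: "herm_pauli n A \<Longrightarrow> adj A = A"
proof -
  assume "herm_pauli n A"
  then obtain s p where s: "s = 1 \<or> s = -1" and A: "A = s \<cdot>\<^sub>m pauli_mat n p" by (auto simp: herm_pauli_def)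
  have "cnj s = s" using s by auto
  show "adj A = A"
  proof (rule eq_matI)
    fix r c assume "r < dim_row A" "c < dim_col A"
    then show "adj A $$ (r, c) = A $$ (r, c)" using \<open>cnj s = s\<close>
      by (simp add: A adj_def pauli_mat_def e_cnj)
  qed (auto simp: adj_def A)
qed

lemma herm_neg: "herm_pauli n A \<Longrightarrow> herm_pauli n (- A)"
proof -
  assume "herm_pauli n A"
  then obtain s p where s: "s = 1 \<or> s = -1" and A: "A = s \<cdot>\<^sub>m pauli_mat n p" by (auto simp: herm_pauli_def)
  have "- A = (- s) \<cdot>\<^sub>m pauli_mat n p" by (simp add: A uminus_smult_mat[of "_ \<cdot>\<^sub>m _"] smult_smult_mat)
  moreover have "- s = 1 \<or> - s = -1" using s by auto
  ultimately show ?thesis unfolding herm_pauli_def by blast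
qed

lemma herm_comm_or_anti:
  assumes "herm_pauli n A" "herm_pauli n B"
  shows "A * B = B * A \<or> A * B = - (B * A)"
proof -
  obtain s p where s: "s = 1 \<or> s = -1" and A: "A = s \<cdot>\<^sub>m pauli_mat n p" using assms(1) by (auto simp: herm_pauli_def)
  obtain t q where t: "t = 1 \<or> t = -1" and B: "B = t \<cdot>\<^sub>m pauli_mat n q" using assms(2) by (auto simp: herm_pauli_def)
  have pq: "(\<lambda>i. pmul (q i) (p i)) = (\<lambda>i. pmul (p i) (q i))" using pmul_comm by auto
  have AB: "A * B = (s * t * (\<Prod>i<n. ph (p i) (q i))) \<cdot>\<^sub>m pauli_mat n (\<lambda>i. pmul (p i) (q i))"
    by (simp add: A B smult_mult_smult[OF pauli_mat_carrier pauli_mat_carrier] pauli_mult smult_smult_mat)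
  have BA: "B * A = (s * t * (\<Prod>i<n. ph (q i) (p i))) \<cdot>\<^sub>m pauli_mat n (\<lambda>i. pmul (p i) (q i))"
    by (simp add: A B smult_mult_smult[OF pauli_mat_carrier pauli_mat_carrier] pauli_mult smult_smult_mat pq mult.commute)
  from prod_ph_anti[where q=q and p=p and n=n] show ?thesis
  proof
    assume "(\<Prod>i<n. ph (q i) (p i)) = (\<Prod>i<n. ph (p i) (q i))"
    then show ?thesis using AB BA by simp
  next
    assume "(\<Prod>i<n. ph (q i) (p i)) = - (\<Prod>i<n. ph (p i) (q i))"
    then have "B * A = - (A * B)" using AB BA by (simp add: uminus_smult_mat[of "_ \<cdot>\<^sub>m _"] smult_smult_mat)
    then show ?thesis by simp
  qed
qed

lemma herm_mult:
  assumes "herm_pauli n A" "herm_pauli n B" "A * B = B * A"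
  shows "herm_pauli n (A * B)"
proof -
  obtain s p where s: "s = 1 \<or> s = -1" and A: "A = s \<cdot>\<^sub>m pauli_mat n p" using assms(1) by (auto simp: herm_pauli_def)
  obtain t q where t: "t = 1 \<or> t = -1" and B: "B = t \<cdot>\<^sub>m pauli_mat n q" using assms(2) by (auto simp: herm_pauli_def)
  have pq: "(\<lambda>i. pmul (q i) (p i)) = (\<lambda>i. pmul (p i) (q i))" using pmul_comm by auto
  define \<phi> where "\<phi> = (\<Prod>i<n. ph (p i) (q i))"
  define \<phi>' where "\<phi>' = (\<Prod>i<n. ph (q i) (p i))"
  have AB: "A * B = (s * t * \<phi>) \<cdot>\<^sub>m pauli_mat n (\<lambda>i. pmul (p i) (q i))"
    by (simp add: A B smult_mult_smult[OF pauli_mat_carrier pauli_mat_carrier] pauli_mult smult_smult_mat \<phi>_def)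
  have BA: "B * A = (s * t * \<phi>') \<cdot>\<^sub>m pauli_mat n (\<lambda>i. pmul (p i) (q i))"
    by (simp add: A B smult_mult_smult[OF pauli_mat_carrier pauli_mat_carrier] pauli_mult smult_smult_mat pq mult.commute \<phi>'_def)
  have "s * t * \<phi> = s * t * \<phi>'" using assms(3) AB BA smult_cancel_pauli by metis
  then have "\<phi> = \<phi>'" using s t by auto
  moreover have "\<phi> * \<phi>' = 1" unfolding \<phi>_def \<phi>'_def by (rule prod_ph_comm)
  ultimately have "\<phi> * \<phi> = 1" by simp
  then have "\<phi> = 1 \<or> \<phi> = -1"
    by (metis power2_eq_square power2_eq_1_iff)
  then have "s * t * \<phi> = 1 \<or> s * t * \<phi> = -1" using s t by auto
  then show ?thesis using AB unfolding herm_pauli_def by blast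
qed

lemma mtr_smult: "A \<in> carrier_mat N N \<Longrightarrow> mtr (a \<cdot>\<^sub>m A) = a * mtr A"
  unfolding mtr_def by (auto simp: sum_distrib_left intro!: sum.cong)

lemma herm_trace:
  assumes "herm_pauli n A" "A \<noteq> 1\<^sub>m (2^n)" "A \<noteq> - 1\<^sub>m (2^n)"
  shows "mtr A = 0"
proof -
  obtain s p where s: "s = 1 \<or> s = -1" and A: "A = s \<cdot>\<^sub>m pauli_mat n p" using assms(1) by (auto simp: herm_pauli_def)
  have "\<exists>i<n. p i \<noteq> PI"
  proof (rule ccontr)
    assume "\<not> (\<exists>i<n. p i \<noteq> PI)"
    then have "pauli_mat n p = 1\<^sub>m (2^n)" by (intro pauli_mat_I) auto
    then show False using assms(2,3) s A by (auto simp: uminus_smult_mat[of "1\<^sub>m _"])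
  qed
  then show ?thesis using A pauli_trace mtr_smult[OF pauli_mat_carrier] by auto
qed



definition PProd :: "nat \<Rightarrow> (complex mat \<times> bit) list \<Rightarrow> complex mat" where
  "PProd n L = foldr (\<lambda>(T,b) M. proj n T b * M) L (1\<^sub>m (2^n))"

lemma Pi_Nil[simp]: "PProd n [] = 1\<^sub>m (2^n)"
  by (simp add: PProd_def)

lemma Pi_Cons[simp]: "PProd n ((T,b) # L) = proj n T b * PProd n L"
  by (simp add: PProd_def)

abbreviation cset :: "nat \<Rightarrow> complex mat set \<Rightarrow> bool" where
  "cset n A \<equiv> (\<forall>T\<in>A. T \<in> carrier_mat (2^n) (2^n))"


context fixes n :: nat
begin

lemma mult_cN[simp]: "(A::complex mat) \<in> carrier_mat (2^n) (2^n) \<Longrightarrow> B \<in> carrier_mat (2^n) (2^n) \<Longrightarrow> A * B \<in> carrier_mat (2^n) (2^n)"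
  by simp

lemma one_mult_cN[simp]: "(A::complex mat) \<in> carrier_mat (2^n) (2^n) \<Longrightarrow> 1\<^sub>m (2^n) * A = A"
  by (rule left_mult_one_mat)

lemma mult_one_cN[simp]: "(A::complex mat) \<in> carrier_mat (2^n) (2^n) \<Longrightarrow> A * 1\<^sub>m (2^n) = A"
  by (rule right_mult_one_mat)

lemmas cm_simps = mult_add_distrib_mat[where nr="2^n" and n="2^n" and nc="2^n"]
  add_mult_distrib_mat[where nr="2^n" and n="2^n" and nc="2^n"]
  mult_smult_distrib[where nr="2^n" and n="2^n" and nc="2^n"]
  mult_smult_assoc_mat[where nr="2^n" and n="2^n" and nc="2^n"]
  assoc_mult_mat[where ?n\<^sub>1="2^n" and ?n\<^sub>2="2^n" and ?n\<^sub>3="2^n" and ?n\<^sub>4="2^n"]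

definition sgnc :: "bit \<Rightarrow> complex" where
  "sgnc b = (if b = 0 then 1 else -1)"

lemma sgnc_sq[simp]: "sgnc b * sgnc b = 1"
  by (simp add: sgnc_def)

lemma sgnc_add: "sgnc (a + b) = sgnc a * sgnc b"
  by (cases a; cases b) (simp_all add: sgnc_def)

lemma sgnc_0[simp]: "sgnc 0 = 1" and sgnc_1[simp]: "sgnc 1 = -1"
  by (simp_all add: sgnc_def)

lemma proj_alt: "S \<in> carrier_mat (2^n) (2^n) \<Longrightarrow>
  proj n S b = (1/2) \<cdot>\<^sub>m (1\<^sub>m (2^n) + sgnc b \<cdot>\<^sub>m S)"
  by (cases b) (auto simp: proj_def sgnc_def uminus_smult_mat[of S])

lemma proj_carrier[simp]: "S \<in> carrier_mat (2^n) (2^n) \<Longrightarrow> proj n S b \<in> carrier_mat (2^n) (2^n)"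
  by (simp add: proj_alt)

lemma mult_proj_left:
  assumes "A \<in> carrier_mat (2^n) (2^n)" "S \<in> carrier_mat (2^n) (2^n)"
  shows "A * proj n S b = (1/2) \<cdot>\<^sub>m (A + sgnc b \<cdot>\<^sub>m (A * S))"
  using assms by (simp add: proj_alt cm_simps)

lemma mult_proj_right:
  assumes "A \<in> carrier_mat (2^n) (2^n)" "S \<in> carrier_mat (2^n) (2^n)"
  shows "proj n S b * A = (1/2) \<cdot>\<^sub>m (A + sgnc b \<cdot>\<^sub>m (S * A))"
  using assms by (simp add: proj_alt cm_simps)

lemma S_proj:
  assumes "S \<in> carrier_mat (2^n) (2^n)" "S * S = 1\<^sub>m (2^n)"
  shows "S * proj n S b = sgnc b \<cdot>\<^sub>m proj n S b"
proof -
  have "S * proj n S b = (1/2) \<cdot>\<^sub>m (S + sgnc b \<cdot>\<^sub>m 1\<^sub>m (2^n))"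
    using assms by (simp add: mult_proj_left)
  also have "\<dots> = sgnc b \<cdot>\<^sub>m proj n S b"
    using assms(1) by (intro eq_matI) (auto simp: proj_alt algebra_simps sgnc_def)
  finally show ?thesis .
qed

lemma proj_S:
  assumes "S \<in> carrier_mat (2^n) (2^n)" "S * S = 1\<^sub>m (2^n)"
  shows "proj n S b * S = sgnc b \<cdot>\<^sub>m proj n S b"
proof -
  have "proj n S b * S = (1/2) \<cdot>\<^sub>m (S + sgnc b \<cdot>\<^sub>m 1\<^sub>m (2^n))"
    using assms by (simp add: mult_proj_right)
  also have "\<dots> = sgnc b \<cdot>\<^sub>m proj n S b"
    using assms(1) by (intro eq_matI) (auto simp: proj_alt algebra_simps sgnc_def)
  finally show ?thesis .
qed

lemma sgnc_succ: "sgnc (b + 1) = - sgnc b"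
  by (cases b) (simp_all add: sgnc_def)

lemma smult_combine: "(1/2) \<cdot>\<^sub>m (A + c \<cdot>\<^sub>m (d \<cdot>\<^sub>m A)) = ((1 + c * d) / 2 :: complex) \<cdot>\<^sub>m A"
  by (rule eq_matI) (auto simp: field_simps)

lemma zero_smult_mat: "A \<in> carrier_mat (2^n) (2^n) \<Longrightarrow> (0::complex) \<cdot>\<^sub>m A = 0\<^sub>m (2^n) (2^n)"
  by (rule eq_matI) auto

lemma proj_idem:
  assumes "S \<in> carrier_mat (2^n) (2^n)" "S * S = 1\<^sub>m (2^n)"
  shows "proj n S b * proj n S b = proj n S b"
proof -
  have "proj n S b * proj n S b = (1/2) \<cdot>\<^sub>m (proj n S b + sgnc b \<cdot>\<^sub>m (proj n S b * S))"
    using assms by (simp add: mult_proj_left)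
  also have "\<dots> = proj n S b"
    using assms by (simp only: proj_S smult_combine sgnc_sq) simp
  finally show ?thesis .
qed

lemma proj_orth:
  assumes "S \<in> carrier_mat (2^n) (2^n)" "S * S = 1\<^sub>m (2^n)"
  shows "proj n S b * proj n S (b+1) = 0\<^sub>m (2^n) (2^n)"
proof -
  have "proj n S b * proj n S (b+1) = (1/2) \<cdot>\<^sub>m (proj n S b + sgnc (b+1) \<cdot>\<^sub>m (proj n S b * S))"
    using assms by (simp add: mult_proj_left)
  also have "\<dots> = 0\<^sub>m (2^n) (2^n)"
    using assms by (simp only: proj_S smult_combine sgnc_succ) (simp add: zero_smult_mat)
  finally show ?thesis .
qed

lemma proj_sum:
  assumes "S \<in> carrier_mat (2^n) (2^n)"
  shows "proj n S 0 + proj n S 1 = 1\<^sub>m (2^n)"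
  using assms by (simp add: proj_alt) (intro eq_matI; auto simp: field_simps)

lemma proj_neg:
  assumes "S \<in> carrier_mat (2^n) (2^n)"
  shows "proj n (- S) b = proj n S (b+1)"
  using assms by (simp only: proj_alt uminus_carrier_iff_mat sgnc_succ) (intro eq_matI; auto)

lemma comm_proj:
  assumes "A \<in> carrier_mat (2^n) (2^n)" "S \<in> carrier_mat (2^n) (2^n)" "A * S = S * A"
  shows "A * proj n S b = proj n S b * A"
  using assms by (simp add: mult_proj_left mult_proj_right)

lemma anti_proj:
  assumes "A \<in> carrier_mat (2^n) (2^n)" "S \<in> carrier_mat (2^n) (2^n)" "A * S = - (S * A)"
  shows "A * proj n S b = proj n S (b+1) * A"
  using assms by (simp only: mult_proj_left mult_proj_right sgnc_succ) (intro eq_matI; auto)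

lemma proj_proj_comm:
  assumes "S \<in> carrier_mat (2^n) (2^n)" "T \<in> carrier_mat (2^n) (2^n)" "S * T = T * S"
  shows "proj n S b * proj n T c = proj n T c * proj n S b"
proof -
  have "T * proj n S b = proj n S b * T" using assms by (intro comm_proj) auto
  then show ?thesis using assms by (intro comm_proj) auto
qed

lemma mtr_add: "A \<in> carrier_mat (2^n) (2^n) \<Longrightarrow> B \<in> carrier_mat (2^n) (2^n) \<Longrightarrow> mtr (A + B) = mtr A + mtr B"
  unfolding mtr_def by (auto simp: sum.distrib intro!: sum.cong)

lemma mtr_one: "mtr (1\<^sub>m (2^n)) = 2^n"
  unfolding mtr_def by simp

lemma mtr_comm: assumes "A \<in> carrier_mat (2^n) (2^n)" "B \<in> carrier_mat (2^n) (2^n)"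
  shows "mtr (A * B) = mtr (B * A)"
proof -
  have "mtr (A * B) = (\<Sum>i<2^n. \<Sum>k<2^n. A $$ (i,k) * B $$ (k,i))"
    using assms unfolding mtr_def by (auto simp: scalar_prod_def lessThan_atLeast0 intro!: sum.cong)
  also have "\<dots> = (\<Sum>k<2^n. \<Sum>i<2^n. B $$ (k,i) * A $$ (i,k))"
    by (subst sum.swap) (simp add: mult.commute)
  also have "\<dots> = mtr (B * A)"
    using assms unfolding mtr_def by (auto simp: scalar_prod_def lessThan_atLeast0 intro!: sum.cong)
  finally show ?thesis .
qed

lemma mtr_proj:
  assumes "S \<in> carrier_mat (2^n) (2^n)" "X \<in> carrier_mat (2^n) (2^n)"
  shows "mtr (proj n S b * X) = (mtr X + sgnc b * mtr (S * X)) / 2"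
  using assms by (simp add: mult_proj_right mtr_smult[of _ "2^n"] mtr_add)

lemma conj_proj:
  assumes "U \<in> carrier_mat (2^n) (2^n)" "V \<in> carrier_mat (2^n) (2^n)" "S \<in> carrier_mat (2^n) (2^n)"
    "U * V = 1\<^sub>m (2^n)"
  shows "U * proj n S b * V = proj n (U * S * V) b"
  using assms by (simp add: proj_alt cm_simps)


lemma Pi_carrier[simp]: "cset n (fst ` set L) \<Longrightarrow> PProd n L \<in> carrier_mat (2^n) (2^n)"
  by (induction L) (auto )

lemma Pi_append: "cset n (fst ` set L1) \<Longrightarrow> cset n (fst ` set L2) \<Longrightarrow> PProd n (L1 @ L2) = PProd n L1 * PProd n L2"
proof (induction L1)
  case Nil then show ?case by simp
next
  case (Cons a L1)
  obtain T b where a: "a = (T,b)" by force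
  show ?case using Cons by (auto simp: a cm_simps)
qed

lemma Pi_commute:
  assumes "A \<in> carrier_mat (2^n) (2^n)" "cset n (fst ` set L)" "\<forall>T\<in>fst ` set L. A * T = T * A"
  shows "A * PProd n L = PProd n L * A"
  using assms
proof (induction L)
  case Nil then show ?case by simp
next
  case (Cons a L)
  obtain T b where a: "a = (T,b)" by force
  have T: "T \<in> carrier_mat (2^n) (2^n)" "A * T = T * A" using Cons.prems by (auto simp: a)
  have IH: "A * PProd n L = PProd n L * A" using Cons by (auto )
  have c: "cset n (fst ` set L)" using Cons.prems by (auto )
  have "A * PProd n (a # L) = (A * proj n T b) * PProd n L" using T c Cons.prems by (simp add: a cm_simps)
  also have "\<dots> = proj n T b * (A * PProd n L)" using T c Cons.prems comm_proj[where A=A and S=T and b=b] by (simp add: cm_simps)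
  also have "\<dots> = PProd n (a # L) * A" using T c Cons.prems IH by (simp add: a cm_simps)
  finally show ?case .
qed

lemma Pi_eig:
  assumes "\<forall>x\<in>set L. fst x \<in> carrier_mat (2^n) (2^n)" "\<forall>x\<in>set L. fst x * fst x = 1\<^sub>m (2^n)"
    "\<forall>x\<in>set L. \<forall>y\<in>set L. fst x * fst y = fst y * fst x" "(T,b) \<in> set L"
  shows "T * PProd n L = sgnc b \<cdot>\<^sub>m PProd n L"
  using assms
proof (induction L)
  case Nil then show ?case by simp
next
  case (Cons a L)
  obtain T' b' where a: "a = (T',b')" by force
  have T': "T' \<in> carrier_mat (2^n) (2^n)" "T' * T' = 1\<^sub>m (2^n)" using Cons.prems(1,2) by (auto simp: a)
  have T: "T \<in> carrier_mat (2^n) (2^n)" "T * T = 1\<^sub>m (2^n)" using Cons.prems(1,2,4) by auto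
  have c: "\<forall>x\<in>set L. fst x \<in> carrier_mat (2^n) (2^n)" using Cons.prems(1) by auto
  show ?case
  proof (cases "(T,b) = (T',b')")
    case True
    then have "T * PProd n (a # L) = (T * proj n T b) * PProd n L" using T c by (simp add: a cm_simps)
    also have "\<dots> = sgnc b \<cdot>\<^sub>m PProd n (a # L)" using T c True by (simp add: S_proj a cm_simps)
    finally show ?thesis .
  next
    case False
    then have inL: "(T,b) \<in> set L" using Cons.prems(4) by (auto simp: a)
    have IH: "T * PProd n L = sgnc b \<cdot>\<^sub>m PProd n L"
      using Cons.prems(1,2,3) inL by (intro Cons.IH) auto
    have cTT': "T * T' = T' * T" using Cons.prems(3) inL unfolding a by force
    have "T * PProd n (a # L) = (T * proj n T' b') * PProd n L" using T T' c by (simp add: a cm_simps)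
    also have "\<dots> = (proj n T' b' * T) * PProd n L" using comm_proj[where A=T and S=T' and b=b'] T T' cTT' by simp
    also have "\<dots> = proj n T' b' * (T * PProd n L)" using T T' c by (simp add: cm_simps)
    also have "\<dots> = sgnc b \<cdot>\<^sub>m PProd n (a # L)" using T T' c by (simp add: IH a cm_simps)
    finally show ?thesis .
  qed
qed

lemma Pi_move:
  assumes "\<forall>x\<in>set (A @ x # B). fst x \<in> carrier_mat (2^n) (2^n)"
    "\<forall>y\<in>set A. fst x * fst y = fst y * fst x"
  shows "PProd n (A @ x # B) = proj n (fst x) (snd x) * PProd n (A @ B)"
  using assms
proof (induction A)
  case Nil then show ?case by (cases x) simp
next
  case (Cons a A)
  obtain T b where a: "a = (T,b)" by force
  obtain X c where x: "x = (X,c)" by force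
  have cs: "T \<in> carrier_mat (2^n) (2^n)" "X \<in> carrier_mat (2^n) (2^n)" "X * T = T * X"
    "\<forall>x\<in>set (A @ B). fst x \<in> carrier_mat (2^n) (2^n)"
    using Cons.prems by (auto simp: a x)
  have IH: "PProd n (A @ x # B) = proj n X c * PProd n (A @ B)" using Cons by (auto simp: x)
  have "PProd n ((a # A) @ x # B) = proj n T b * (proj n X c * PProd n (A @ B))" by (simp add: a IH)
  also have "\<dots> = (proj n T b * proj n X c) * PProd n (A @ B)" using cs by (simp add: cm_simps)
  also have "proj n T b * proj n X c = proj n X c * proj n T b" using cs proj_proj_comm[where S=T and T=X] by simp
  also have "(proj n X c * proj n T b) * PProd n (A @ B) = proj n (fst x) (snd x) * PProd n ((a # A) @ B)"
    using cs by (simp add: cm_simps a x)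
  finally show ?case .
qed

lemma Pi_replace:
  assumes "length L = length L'" "Q \<in> carrier_mat (2^n) (2^n)"
    "\<forall>x\<in>set L. fst x \<in> carrier_mat (2^n) (2^n)" "\<forall>x\<in>set L'. fst x \<in> carrier_mat (2^n) (2^n)"
    "\<forall>i<length L. Q * proj n (fst (L!i)) (snd (L!i)) = Q * proj n (fst (L'!i)) (snd (L'!i))"
    "\<forall>x\<in>set L. Q * proj n (fst x) (snd x) = proj n (fst x) (snd x) * Q"
    "\<forall>x\<in>set L'. Q * proj n (fst x) (snd x) = proj n (fst x) (snd x) * Q"
  shows "Q * PProd n L = Q * PProd n L'"
  using assms
proof (induction L L' rule: list_induct2)
  case Nil then show ?case by simp
next
  case (Cons a L a' L')
  obtain T b where a: "a = (T,b)" by force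
  obtain T' b' where a': "a' = (T',b')" by force
  have cs: "T \<in> carrier_mat (2^n) (2^n)" "T' \<in> carrier_mat (2^n) (2^n)"
    "\<forall>x\<in>set L. fst x \<in> carrier_mat (2^n) (2^n)" "\<forall>x\<in>set L'. fst x \<in> carrier_mat (2^n) (2^n)"
    using Cons.prems(2,3) by (auto simp: a a')
  have IH: "Q * PProd n L = Q * PProd n L'"
  proof (rule Cons.IH)
    show "\<forall>i<length L. Q * proj n (fst (L ! i)) (snd (L ! i)) = Q * proj n (fst (L' ! i)) (snd (L' ! i))"
    proof (intro allI impI)
      fix i assume "i < length L"
      then show "Q * proj n (fst (L ! i)) (snd (L ! i)) = Q * proj n (fst (L' ! i)) (snd (L' ! i))"
        using Cons.prems(4)[rule_format, of "Suc i"] by simp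
    qed
  qed (use Cons.prems(1,2,3,5,6) in auto)
  have h: "Q * proj n T b = Q * proj n T' b'" using Cons.prems(4)[rule_format, of 0] by (simp add: a a')
  have cQ: "Q * proj n T' b' = proj n T' b' * Q" using Cons.prems(6) by (simp add: a')
  have "Q * PProd n (a # L) = (Q * proj n T b) * PProd n L" using cs Cons.prems(1) by (simp add: a cm_simps)
  also have "\<dots> = (proj n T' b' * Q) * PProd n L" using h cQ by simp
  also have "\<dots> = proj n T' b' * (Q * PProd n L')" using cs Cons.prems(1) by (simp add: IH[symmetric] cm_simps)
  also have "\<dots> = (Q * proj n T' b') * PProd n L'" using cs Cons.prems(1) cQ by (simp add: cm_simps)
  also have "\<dots> = Q * PProd n (a' # L')" using cs Cons.prems(1) by (simp add: a' cm_simps)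
  finally show ?case .
qed


lemma gen_mono: "A \<in> gen_group n Ts \<Longrightarrow> set Ts \<subseteq> set Ts' \<Longrightarrow> A \<in> gen_group n Ts'"
proof (induction rule: gen_group.induct)
  case one show ?case by (rule gen_group.one)
next
  case (gen T) then show ?case by (auto intro: gen_group.gen)
next
  case (inv T) then show ?case by (auto intro: gen_group.inv)
next
  case (mult A B) then show ?case by (auto intro: gen_group.mult)
qed

lemma gen_sub: "A \<in> gen_group n Ts' \<Longrightarrow> (\<forall>T\<in>set Ts'. T \<in> gen_group n Ts \<and> adj T \<in> gen_group n Ts) \<Longrightarrow>
   A \<in> gen_group n Ts"
proof (induction rule: gen_group.induct)
  case one show ?case by (rule gen_group.one)
next
  case (gen T) then show ?case by auto
next
  case (inv T) then show ?case by auto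
next
  case (mult A B) then show ?case by (auto intro: gen_group.mult)
qed

lemma mtr_zero:
  assumes "\<forall>x\<in>set L. herm_pauli n (fst x)"
    "\<forall>x\<in>set L. \<forall>y\<in>set L. fst x * fst y = fst y * fst x"
    "herm_pauli n X" "\<forall>x\<in>set L. fst x * X = X * fst x"
    "X \<notin> gen_group n (map fst L)" "- X \<notin> gen_group n (map fst L)"
  shows "mtr (PProd n L * X) = 0"
  using assms
proof (induction L arbitrary: X)
  case Nil
  have X: "X \<in> carrier_mat (2^n) (2^n)" using Nil herm_carrier by auto
  have "X \<noteq> 1\<^sub>m (2^n)" using Nil(5) gen_group.one by fastforce
  moreover have "X \<noteq> - 1\<^sub>m (2^n)" using Nil(6) gen_group.one by fastforce
  ultimately have "mtr X = 0" using Nil(3) herm_trace by blast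
  then show ?case using X by simp
next
  case (Cons a L)
  obtain T b where a: "a = (T,b)" by force
  have hT: "herm_pauli n T" using Cons.prems(1) by (simp add: a)
  have T: "T \<in> carrier_mat (2^n) (2^n)" "T * T = 1\<^sub>m (2^n)" using hT herm_carrier herm_sq by auto
  have X: "X \<in> carrier_mat (2^n) (2^n)" using Cons.prems(3) herm_carrier by auto
  have hL: "\<forall>x\<in>set L. herm_pauli n (fst x)" using Cons.prems(1) by auto
  have cL: "\<forall>x\<in>set L. fst x \<in> carrier_mat (2^n) (2^n)" using hL herm_carrier by auto
  have comL: "\<forall>x\<in>set L. \<forall>y\<in>set L. fst x * fst y = fst y * fst x" using Cons.prems(2) by auto
  have TL: "\<forall>x\<in>set L. T * fst x = fst x * T" using Cons.prems(2) unfolding a by force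
  have TX: "T * X = X * T" using Cons.prems(4) by (simp add: a)
  have XL: "\<forall>x\<in>set L. fst x * X = X * fst x" using Cons.prems(4) by auto
  have Tgen: "T \<in> gen_group n (map fst (a # L))" by (rule gen_group.gen) (simp add: a)
  have sub: "\<And>A. A \<in> gen_group n (map fst L) \<Longrightarrow> A \<in> gen_group n (map fst (a # L))"
    by (rule gen_mono) auto
  have PiL: "PProd n L \<in> carrier_mat (2^n) (2^n)" using cL by simp
  have z1: "mtr (PProd n L * X) = 0"
    using Cons.IH[OF hL comL Cons.prems(3) XL] Cons.prems(5,6) sub by blast
  have hTX: "herm_pauli n (T * X)" using herm_mult[OF hT Cons.prems(3) TX] .
  have TXL: "\<forall>x\<in>set L. fst x * (T * X) = (T * X) * fst x"
  proof
    fix x assume x: "x \<in> set L"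
    have c: "fst x \<in> carrier_mat (2^n) (2^n)" using cL x by auto
    have "fst x * (T * X) = (fst x * T) * X" using c T X by (simp add: cm_simps)
    also have "\<dots> = (T * fst x) * X" using TL x by simp
    also have "\<dots> = T * (fst x * X)" using c T X by (simp add: cm_simps)
    also have "\<dots> = (T * X) * fst x" using c T X XL x by (simp add: cm_simps)
    finally show "fst x * (T * X) = (T * X) * fst x" .
  qed
  have TTX: "T * (T * X) = X"
  proof -
    have "(T * T) * X = T * (T * X)" using T X by (intro assoc_mult_mat) auto
    then show ?thesis using T X by (metis one_mult_cN)
  qed
  have n1: "T * X \<notin> gen_group n (map fst L)"
  proof
    assume "T * X \<in> gen_group n (map fst L)"
    then have "T * (T * X) \<in> gen_group n (map fst (a # L))" using Tgen sub gen_group.mult by blast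
    then show False using TTX Cons.prems(5) by simp
  qed
  have n2: "- (T * X) \<notin> gen_group n (map fst L)"
  proof
    assume "- (T * X) \<in> gen_group n (map fst L)"
    then have "T * (- (T * X)) \<in> gen_group n (map fst (a # L))" using Tgen sub gen_group.mult by blast
    moreover have "T * (- (T * X)) = - X" using T X TTX by simp
    ultimately show False using Cons.prems(6) by simp
  qed
  have z2: "mtr (PProd n L * (T * X)) = 0"
    using Cons.IH[OF hL comL hTX TXL n1 n2] .
  have comm: "T * PProd n L = PProd n L * T" using Pi_commute[of T L] T cL TL by auto
  have "T * (PProd n L * X) = (T * PProd n L) * X" using T X PiL by (simp add: cm_simps)
  also have "\<dots> = (PProd n L * T) * X" using comm by simp
  also have "\<dots> = PProd n L * (T * X)" using T X PiL by (simp add: cm_simps)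
  finally have eq: "T * (PProd n L * X) = PProd n L * (T * X)" .
  have "PProd n (a # L) * X = proj n T b * (PProd n L * X)" using T X PiL by (simp add: a cm_simps)
  then have "mtr (PProd n (a # L) * X) = (mtr (PProd n L * X) + sgnc b * mtr (T * (PProd n L * X))) / 2"
    using mtr_proj[of T "PProd n L * X" b] T X PiL by simp
  then have "mtr (PProd n (a # L) * X) = (mtr (PProd n L * X) + sgnc b * mtr (PProd n L * (T * X))) / 2"
    using eq by simp
  then show ?case using z1 z2 by simp
qed

end



lemma bit_add_self[simp]: "(x::bit) + x = 0"
  by (cases x) simp_all

lemma sum_symdiff:
  fixes f :: "nat \<Rightarrow> bit"
  assumes "finite A" "finite B"
  shows "(\<Sum>k\<in>(A - B) \<union> (B - A). f k) = sum f A + sum f B"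
proof -
  have "(\<Sum>k\<in>(A - B) \<union> (B - A). f k) = sum f (A - B) + sum f (B - A)"
    using assms by (intro sum.union_disjoint) auto
  moreover have "sum f A = sum f (A - B) + sum f (A \<inter> B)"
    using assms by (metis Diff_Diff_Int Diff_subset finite_Diff sum.subset_diff add.commute)
  moreover have "sum f B = sum f (B - A) + sum f (A \<inter> B)"
    using assms by (metis Diff_Diff_Int Diff_subset finite_Diff sum.subset_diff add.commute inf_commute)
  moreover have "\<And>x y z::bit. x + y = (x + z) + (y + z)"
    by (case_tac x; case_tac y; case_tac z) simp_all
  ultimately show ?thesis by metis
qed


definition sgnl :: "(nat \<Rightarrow> bit) \<Rightarrow> alg_state \<Rightarrow> (complex mat \<times> bit) list" where
  "sgnl w S = map (\<lambda>(T,K). (T, \<Sum>k\<in>K. w k)) S"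

definition upd :: "(nat \<Rightarrow> bit) \<Rightarrow> nat \<Rightarrow> bit list \<Rightarrow> nat \<Rightarrow> bit" where
  "upd w j os = (\<lambda>k. if j \<le> k \<and> k < j + length os then os ! (k - j) else w k)"

definition sat :: "(nat \<times> nat set \<times> bool) list \<Rightarrow> (nat \<Rightarrow> bit) \<Rightarrow> bool" where
  "sat R w \<longleftrightarrow> (\<forall>(j,K,e)\<in>set R. w j + (\<Sum>k\<in>K. w k) = 0)"

definition FS :: "(nat \<times> nat set \<times> bool) list \<Rightarrow> nat set" where
  "FS R = {j. \<exists>K. (j, K, False) \<in> set R}"

definition Inv :: "nat \<Rightarrow> alg_state \<Rightarrow> nat \<Rightarrow> bool" where
  "Inv n S j \<longleftrightarrow> (\<forall>x\<in>set S. herm_pauli n (fst x)) \<and>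
     (\<forall>x\<in>set S. \<forall>y\<in>set S. fst x * fst y = fst y * fst x) \<and>
     (\<forall>x\<in>set S. finite (snd x) \<and> snd x \<subseteq> {..<j}) \<and>
     (\<forall>bs. length bs = length S \<longrightarrow> mtr (PProd n (zip (map fst S) bs)) = 2^n / 2^(length S))"

fun opc :: "nat \<Rightarrow> operation \<Rightarrow> bool" where
  "opc n (Gate U) = (U \<in> carrier_mat (2^n) (2^n))"
| "opc n (Meas S) = (S \<in> carrier_mat (2^n) (2^n))"

lemma oca_idx: "oca n C S j S' R \<Longrightarrow> \<forall>x\<in>set R. j \<le> fst x"
  by (induction rule: oca.induct) auto

lemma flip_cong: "(\<forall>k\<ge>j. k \<in> F \<longleftrightarrow> k \<in> F') \<Longrightarrow> flip_meas F j C = flip_meas F' j C"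
proof (induction F j C rule: flip_meas.induct)
  case (1 F j) then show ?case by simp
next
  case (2 F j U C) then show ?case by simp
next
  case (3 F j S C)
  have "j \<in> F \<longleftrightarrow> j \<in> F'" using 3(2) by simp
  moreover have "flip_meas F (Suc j) C = flip_meas F' (Suc j) C" using 3 by auto
  ultimately show ?case by simp
qed

lemma num_meas_flip: "num_meas (flip_meas F j C) = num_meas C"
  by (induction F j C rule: flip_meas.induct) auto

lemma kraus_carrier: "\<forall>op\<in>set C. opc n op \<Longrightarrow> kraus n C os \<in> carrier_mat (2^n) (2^n)"
proof (induction n C os rule: kraus.induct)
  case (1 n os) then show ?case by simp
next
  case (2 n U C os) then show ?case by (simp add: mult_cN)
next
  case (3 n S C) then show ?case by simp
next
  case (4 n S C b os) then show ?case by (simp add: mult_cN)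
qed

lemma flip_opc: "\<forall>op\<in>set C. opc n op \<Longrightarrow> \<forall>op\<in>set (flip_meas F j C). opc n op"
  by (induction F j C rule: flip_meas.induct) auto

lemma valid_opc: "valid_circuit n C \<Longrightarrow> \<forall>op\<in>set C. opc n op"
proof -
  assume v: "valid_circuit n C"
  { fix op assume "op \<in> set C"
    then have "valid_op n op" using v by (auto simp: valid_circuit_def)
    then have "opc n op" by (cases op) (auto simp: clifford_def unitary_on_def herm_carrier) }
  then show ?thesis by blast
qed

lemma upd_Cons: "upd w j (b # os) = upd (w(j := b)) (Suc j) os"
  by (rule ext) (auto simp: upd_def nth_Cons' Suc_diff_le)

lemma upd_low: "k < j \<Longrightarrow> upd w j os k = w k"
  by (simp add: upd_def)

lemma sgnl_upd: "\<forall>x\<in>set S. snd x \<subseteq> {..<j} \<Longrightarrow> sgnl (w(j := b)) S = sgnl w S"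
  unfolding sgnl_def
proof (intro map_cong refl)
  fix x assume "\<forall>x\<in>set S. snd x \<subseteq> {..<j}" "x \<in> set S"
  then have "snd x \<subseteq> {..<j}" by auto
  then have "(\<Sum>k\<in>snd x. (w(j := b)) k) = (\<Sum>k\<in>snd x. w k)" by (intro sum.cong) auto
  then show "(case x of (T, K) \<Rightarrow> (T, \<Sum>k\<in>K. (w(j := b)) k)) = (case x of (T, K) \<Rightarrow> (T, \<Sum>k\<in>K. w k))"
    by (cases x) auto
qed

lemma sgnl_zip: "sgnl w S = zip (map fst S) (map (\<lambda>x. \<Sum>k\<in>snd x. w k) S)"
  unfolding sgnl_def by (induction S) auto

lemma fst_sgnl[simp]: "map fst (sgnl w S) = map fst S"
  unfolding sgnl_def by (induction S) auto

lemma mtr_zero_mat: "mtr (0\<^sub>m (2^n) (2^n)) = 0"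
  by (simp add: mtr_def)

lemma Inv_Pi_nz: "Inv n S j \<Longrightarrow> PProd n (sgnl w S) \<noteq> 0\<^sub>m (2^n) (2^n)"
proof
  assume I: "Inv n S j" and z: "PProd n (sgnl w S) = 0\<^sub>m (2^n) (2^n)"
  have "mtr (PProd n (sgnl w S)) = 2^n / 2^(length S)"
    using I unfolding Inv_def sgnl_zip by auto
  then show False using z mtr_zero_mat by simp
qed


context fixes n :: nat
begin

lemmas cms = mult_add_distrib_mat[where nr="2^n" and n="2^n" and nc="2^n"]
  add_mult_distrib_mat[where nr="2^n" and n="2^n" and nc="2^n"]
  mult_smult_distrib[where nr="2^n" and n="2^n" and nc="2^n"]
  mult_smult_assoc_mat[where nr="2^n" and n="2^n" and nc="2^n"]
  assoc_mult_mat[where ?n\<^sub>1="2^n" and ?n\<^sub>2="2^n" and ?n\<^sub>3="2^n" and ?n\<^sub>4="2^n"]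

lemma one_mult_c[simp]: "(A::complex mat) \<in> carrier_mat (2^n) (2^n) \<Longrightarrow> 1\<^sub>m (2^n) * A = A"
  by (rule left_mult_one_mat)

lemma mult_one_c[simp]: "(A::complex mat) \<in> carrier_mat (2^n) (2^n) \<Longrightarrow> A * 1\<^sub>m (2^n) = A"
  by (rule right_mult_one_mat)

lemma mult_c[simp]: "(A::complex mat) \<in> carrier_mat (2^n) (2^n) \<Longrightarrow> B \<in> carrier_mat (2^n) (2^n) \<Longrightarrow> A * B \<in> carrier_mat (2^n) (2^n)"
  by simp

lemma massoc:
  fixes A B C :: "complex mat"
  assumes "A \<in> carrier_mat (2^n) (2^n)" "B \<in> carrier_mat (2^n) (2^n)" "C \<in> carrier_mat (2^n) (2^n)"
  shows "A * B * C = A * (B * C)"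
  using assms by (intro assoc_mult_mat) auto

lemma lzero[simp]: "(A::complex mat) \<in> carrier_mat (2^n) (2^n) \<Longrightarrow> 0\<^sub>m (2^n) (2^n) * A = 0\<^sub>m (2^n) (2^n)"
  by (rule left_mult_zero_mat)

lemma rzero[simp]: "(A::complex mat) \<in> carrier_mat (2^n) (2^n) \<Longrightarrow> A * 0\<^sub>m (2^n) (2^n) = 0\<^sub>m (2^n) (2^n)"
  by (rule right_mult_zero_mat)

lemma rneg: "(A::complex mat) \<in> carrier_mat (2^n) (2^n) \<Longrightarrow> B \<in> carrier_mat (2^n) (2^n) \<Longrightarrow> A * (- B) = - (A * B)"
  by (rule uminus_mult_right_mat) auto

lemma lneg: "(A::complex mat) \<in> carrier_mat (2^n) (2^n) \<Longrightarrow> B \<in> carrier_mat (2^n) (2^n) \<Longrightarrow> (- A) * B = - (A * B)"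
  by (rule uminus_mult_left_mat) auto

lemma cancel_left:
  fixes V U X :: "complex mat"
  assumes "V \<in> carrier_mat (2^n) (2^n)" "U \<in> carrier_mat (2^n) (2^n)" "X \<in> carrier_mat (2^n) (2^n)"
    "V * U = 1\<^sub>m (2^n)"
  shows "V * (U * X) = X"
proof -
  have h: "(V * U) * X = V * (U * X)" using assms by (intro assoc_mult_mat) auto
  have "V * (U * X) = (V * U) * X" by (rule h[symmetric])
  also have "\<dots> = 1\<^sub>m (2^n) * X" using assms(4) by simp
  also have "\<dots> = X" using assms(3) by simp
  finally show ?thesis .
qed

lemma Pi_conj:
  fixes U V :: "complex mat"
  assumes "U \<in> carrier_mat (2^n) (2^n)" "V \<in> carrier_mat (2^n) (2^n)"
    "U * V = 1\<^sub>m (2^n)" "V * U = 1\<^sub>m (2^n)"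
  shows "\<forall>x\<in>set L. fst x \<in> carrier_mat (2^n) (2^n) \<Longrightarrow>
    U * PProd n L * V = PProd n (map (\<lambda>(T,b). (U * T * V, b)) L)"
proof (induction L)
  case Nil then show ?case using assms by simp
next
  case (Cons a L)
  obtain T b where a: "a = (T,b)" by force
  have T: "T \<in> carrier_mat (2^n) (2^n)" and cL: "\<forall>x\<in>set L. fst x \<in> carrier_mat (2^n) (2^n)"
    using Cons.prems by (auto simp: a)
  have PiL: "PProd n L \<in> carrier_mat (2^n) (2^n)" using cL by simp
  have "U * PProd n (a # L) * V = (U * proj n T b * V) * (U * PProd n L * V)"
    using assms T PiL by (simp add: a cms cancel_left)
  also have "U * proj n T b * V = proj n (U * T * V) b"
    using assms T by (intro conj_proj) auto
  also have "U * PProd n L * V = PProd n (map (\<lambda>(T,b). (U * T * V, b)) L)"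
    using Cons.IH cL by simp
  finally show ?case by (simp add: a)
qed

lemma unitary_step:
  fixes K U V P :: "complex mat"
  assumes "K \<in> carrier_mat (2^n) (2^n)" "U \<in> carrier_mat (2^n) (2^n)" "V \<in> carrier_mat (2^n) (2^n)"
    "P \<in> carrier_mat (2^n) (2^n)" "U * V = 1\<^sub>m (2^n)" "V * U = 1\<^sub>m (2^n)"
  shows "(K * U * P = 0\<^sub>m (2^n) (2^n)) = (K * (U * P * V) = 0\<^sub>m (2^n) (2^n))"
proof
  assume "K * U * P = 0\<^sub>m (2^n) (2^n)"
  then have "(K * U * P) * V = 0\<^sub>m (2^n) (2^n)" using assms by simp
  then show "K * (U * P * V) = 0\<^sub>m (2^n) (2^n)" using assms by (simp add: cms)
next
  assume "K * (U * P * V) = 0\<^sub>m (2^n) (2^n)"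
  then have "K * (U * P * V) * U = 0\<^sub>m (2^n) (2^n)" using assms by simp
  moreover have "K * (U * P * V) * U = K * U * P"
    using assms by (simp add: cms cancel_left)
  ultimately show "K * U * P = 0\<^sub>m (2^n) (2^n)" by simp
qed

lemma zip_map_conj: "length bs = length S \<Longrightarrow>
  zip (map fst (map (\<lambda>(T,K). (f T, K)) S)) bs = map (\<lambda>(T,b). (f T, b)) (zip (map fst S) bs)"
  by (induction S arbitrary: bs) (auto simp: length_Suc_conv)

lemma sgnl_conj: "sgnl w (map (\<lambda>(T,K). (f T, K)) S) = map (\<lambda>(T,b). (f T, b)) (sgnl w S)"
  unfolding sgnl_def by (induction S) auto

lemma Inv_unitary:
  assumes I: "Inv n S j" and U: "clifford n U"
  shows "Inv n (map (\<lambda>(T,K). (U * T * adj U, K)) S) j"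
proof -
  have Uc: "U \<in> carrier_mat (2^n) (2^n)" "adj U \<in> carrier_mat (2^n) (2^n)"
    "U * adj U = 1\<^sub>m (2^n)" "adj U * U = 1\<^sub>m (2^n)"
    using U by (auto simp: clifford_def unitary_on_def adj_def)
  have h: "\<forall>x\<in>set S. herm_pauli n (fst x)" and c: "\<forall>x\<in>set S. \<forall>y\<in>set S. fst x * fst y = fst y * fst x"
    and l: "\<forall>x\<in>set S. finite (snd x) \<and> snd x \<subseteq> {..<j}"
    and tr: "\<forall>bs. length bs = length S \<longrightarrow> mtr (PProd n (zip (map fst S) bs)) = 2^n / 2^(length S)"
    using I by (auto simp: Inv_def)
  have cS: "\<forall>x\<in>set S. fst x \<in> carrier_mat (2^n) (2^n)" using h herm_carrier by auto
  let ?S1 = "map (\<lambda>(T,K). (U * T * adj U, K)) S"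
  have h1: "\<forall>x\<in>set ?S1. herm_pauli n (fst x)" using h U by (auto simp: clifford_def)
  have c1: "\<forall>x\<in>set ?S1. \<forall>y\<in>set ?S1. fst x * fst y = fst y * fst x"
  proof (intro ballI)
    fix x y assume x: "x \<in> set ?S1" and y: "y \<in> set ?S1"
    obtain A KA where xa: "(A,KA) \<in> set S" "x = (U * A * adj U, KA)" using x by auto
    obtain B KB where yb: "(B,KB) \<in> set S" "y = (U * B * adj U, KB)" using y by auto
    have A: "A \<in> carrier_mat (2^n) (2^n)" and B: "B \<in> carrier_mat (2^n) (2^n)" using xa yb cS by auto
    have AB: "A * B = B * A" using c xa yb by force
    have "(U * A * adj U) * (U * B * adj U) = U * (A * B) * adj U"
      using A B Uc by (simp add: cms cancel_left)
    also have "\<dots> = U * (B * A) * adj U" using AB by simp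
    also have "\<dots> = (U * B * adj U) * (U * A * adj U)"
      using A B Uc by (simp add: cms cancel_left)
    finally show "fst x * fst y = fst y * fst x" using xa yb by simp
  qed
  have l1: "\<forall>x\<in>set ?S1. finite (snd x) \<and> snd x \<subseteq> {..<j}" using l by fastforce
  have tr1: "\<forall>bs. length bs = length ?S1 \<longrightarrow> mtr (PProd n (zip (map fst ?S1) bs)) = 2^n / 2^(length ?S1)"
  proof (intro allI impI)
    fix bs :: "bit list" assume len: "length bs = length ?S1"
    let ?L = "zip (map fst S) bs"
    have cL: "\<forall>x\<in>set ?L. fst x \<in> carrier_mat (2^n) (2^n)" using cS by (force dest: set_zip_leftD)
    have P: "PProd n ?L \<in> carrier_mat (2^n) (2^n)" using cL by simp
    have "zip (map fst ?S1) bs = map (\<lambda>(T,b). (U * T * adj U, b)) ?L"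
      using len zip_map_conj[of bs S "\<lambda>T. U * T * adj U"] by simp
    then have "PProd n (zip (map fst ?S1) bs) = U * PProd n ?L * adj U"
      using Pi_conj[OF Uc, of ?L] cL by simp
    also have "mtr (U * PProd n ?L * adj U) = mtr (PProd n ?L * adj U * U)"
      using Uc P by (simp add: cms mtr_comm[of U])
    also have "\<dots> = mtr (PProd n ?L)" using Uc P by (simp add: cms)
    finally show "mtr (PProd n (zip (map fst ?S1) bs)) = 2^n / 2^(length ?S1)" using tr len by simp
  qed
  show ?thesis using h1 c1 l1 tr1 unfolding Inv_def by blast
qed

lemma foldr_symdiff_finite:
  "\<forall>x\<in>set S. finite (snd x) \<Longrightarrow> set xs \<subseteq> {..<length S} \<Longrightarrow>
   finite (foldr (\<lambda>i K. (snd (S ! i) - K) \<union> (K - snd (S ! i))) xs {})"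
  by (induction xs) auto

lemma foldr_prod_carrier:
  fixes S :: alg_state
  shows "\<forall>x\<in>set S. fst x \<in> carrier_mat (2^n) (2^n) \<Longrightarrow> set xs \<subseteq> {..<length S} \<Longrightarrow>
   foldr (\<lambda>i M. fst (S ! i) * M) xs (1\<^sub>m (2^n)) \<in> carrier_mat (2^n) (2^n)"
proof (induction xs)
  case Nil then show ?case by simp
next
  case (Cons a xs)
  then have A: "fst (S ! a) \<in> carrier_mat (2^n) (2^n)" using nth_mem by auto
  have B: "foldr (\<lambda>i M. fst (S ! i) * M) xs (1\<^sub>m (2^n)) \<in> carrier_mat (2^n) (2^n)" using Cons by auto
  show ?case using mult_c[OF A B] by simp
qed

lemma sgnl_mem: "i < length S \<Longrightarrow> (fst (S ! i), \<Sum>k\<in>snd (S ! i). w k) \<in> set (sgnl w S)"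
  unfolding sgnl_def by (metis (mono_tags, lifting) case_prod_beta length_map nth_map nth_mem)

lemma subprod_eig:
  fixes S :: alg_state
  assumes h: "\<forall>x\<in>set S. herm_pauli n (fst x)"
    and c: "\<forall>x\<in>set S. \<forall>y\<in>set S. fst x * fst y = fst y * fst x"
    and f: "\<forall>x\<in>set S. finite (snd x)"
  shows "set xs \<subseteq> {..<length S} \<Longrightarrow>
    foldr (\<lambda>i M. fst (S ! i) * M) xs (1\<^sub>m (2^n)) * PProd n (sgnl w S) =
    sgnc (\<Sum>k\<in>foldr (\<lambda>i K. (snd (S ! i) - K) \<union> (K - snd (S ! i))) xs {}. w k) \<cdot>\<^sub>m PProd n (sgnl w S)"
proof (induction xs)
  have cS: "\<forall>x\<in>set S. fst x \<in> carrier_mat (2^n) (2^n)" using h herm_carrier by auto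
  have cL: "\<forall>x\<in>set (sgnl w S). fst x \<in> carrier_mat (2^n) (2^n)"
    using cS unfolding sgnl_def by auto
  have P: "PProd n (sgnl w S) \<in> carrier_mat (2^n) (2^n)" using cL by simp
  {
    case Nil show ?case using P by simp
  next
    case (Cons i xs)
    have i: "i < length S" and xs: "set xs \<subseteq> {..<length S}" using Cons.prems by auto
    have Si: "fst (S ! i) \<in> carrier_mat (2^n) (2^n)" using cS i by auto
    have F: "foldr (\<lambda>i M. fst (S ! i) * M) xs (1\<^sub>m (2^n)) \<in> carrier_mat (2^n) (2^n)"
      using foldr_prod_carrier[OF cS xs] .
    have fin: "finite (foldr (\<lambda>i K. (snd (S ! i) - K) \<union> (K - snd (S ! i))) xs {})"
      using foldr_symdiff_finite[OF f xs] .
    have fi: "finite (snd (S ! i))" using f i by auto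
    have eig: "fst (S ! i) * PProd n (sgnl w S) = sgnc (\<Sum>k\<in>snd (S ! i). w k) \<cdot>\<^sub>m PProd n (sgnl w S)"
    proof (rule Pi_eig)
      show "\<forall>x\<in>set (sgnl w S). fst x \<in> carrier_mat (2^n) (2^n)" using cL .
      show "\<forall>x\<in>set (sgnl w S). fst x * fst x = 1\<^sub>m (2^n)" using h herm_sq unfolding sgnl_def by auto
      show "\<forall>x\<in>set (sgnl w S). \<forall>y\<in>set (sgnl w S). fst x * fst y = fst y * fst x"
        using c unfolding sgnl_def by fastforce
      show "(fst (S ! i), \<Sum>k\<in>snd (S ! i). w k) \<in> set (sgnl w S)" using sgnl_mem[OF i] .
    qed
    have "foldr (\<lambda>i M. fst (S ! i) * M) (i # xs) (1\<^sub>m (2^n)) * PProd n (sgnl w S)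
        = fst (S ! i) * (foldr (\<lambda>i M. fst (S ! i) * M) xs (1\<^sub>m (2^n)) * PProd n (sgnl w S))"
      using Si F P by (simp add: cms)
    also have "\<dots> = sgnc (\<Sum>k\<in>foldr (\<lambda>i K. (snd (S ! i) - K) \<union> (K - snd (S ! i))) xs {}. w k) \<cdot>\<^sub>m
        (fst (S ! i) * PProd n (sgnl w S))"
      using Cons.IH[OF xs] Si P by (simp add: cms)
    also have "\<dots> = sgnc (\<Sum>k\<in>foldr (\<lambda>i K. (snd (S ! i) - K) \<union> (K - snd (S ! i))) (i # xs) {}. w k) \<cdot>\<^sub>m PProd n (sgnl w S)"
    proof -
      have e: "(\<Sum>k\<in>foldr (\<lambda>i K. (snd (S ! i) - K) \<union> (K - snd (S ! i))) (i # xs) {}. w k)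
          = (\<Sum>k\<in>snd (S ! i). w k) + (\<Sum>k\<in>foldr (\<lambda>i K. (snd (S ! i) - K) \<union> (K - snd (S ! i))) xs {}. w k)"
        using sum_symdiff[OF fi fin] by simp
      show ?thesis by (simp only: e eig sgnc_add smult_smult_mat mult.commute)
    qed
    finally show ?case .
  }
qed

lemma sub_prod_eig:
  fixes S :: alg_state
  assumes "\<forall>x\<in>set S. herm_pauli n (fst x)"
    "\<forall>x\<in>set S. \<forall>y\<in>set S. fst x * fst y = fst y * fst x"
    "\<forall>x\<in>set S. finite (snd x)" "I \<subseteq> {..<length S}"
  shows "sub_prod n S I * PProd n (sgnl w S) = sgnc (\<Sum>k\<in>sub_symdiff S I. w k) \<cdot>\<^sub>m PProd n (sgnl w S)"
proof -
  have "finite I" using assms(4) finite_subset by blast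
  then have "set (sorted_list_of_set I) \<subseteq> {..<length S}" using assms(4) by simp
  then show ?thesis unfolding sub_prod_def sub_symdiff_def using subprod_eig[OF assms(1-3)] by blast
qed

lemma sub_prod_carrier:
  fixes S :: alg_state
  assumes "\<forall>x\<in>set S. fst x \<in> carrier_mat (2^n) (2^n)" "I \<subseteq> {..<length S}"
  shows "sub_prod n S I \<in> carrier_mat (2^n) (2^n)"
proof -
  have "finite I" using assms(2) finite_subset by blast
  then have "set (sorted_list_of_set I) \<subseteq> {..<length S}" using assms(2) by simp
  then show ?thesis unfolding sub_prod_def using foldr_prod_carrier[OF assms(1)] by blast
qed

lemma proj_eig:
  assumes "M \<in> carrier_mat (2^n) (2^n)" "P \<in> carrier_mat (2^n) (2^n)" "M * P = sgnc c \<cdot>\<^sub>m P"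
  shows "proj n M b * P = (if b = c then P else 0\<^sub>m (2^n) (2^n))"
proof -
  have "proj n M b * P = (1/2) \<cdot>\<^sub>m (P + sgnc b \<cdot>\<^sub>m (sgnc c \<cdot>\<^sub>m P))"
    using assms mult_proj_right[where A=P and S=M and b=b] by simp
  also have "\<dots> = ((1 + sgnc b * sgnc c) / 2) \<cdot>\<^sub>m P" by (rule smult_combine)
  also have "\<dots> = (if b = c then P else 0\<^sub>m (2^n) (2^n))"
    using assms(2) by (cases b; cases c) (auto simp: zero_smult_mat)
  finally show ?thesis .
qed

lemma trace_append:
  fixes L :: "(complex mat \<times> bit) list"
  assumes "\<forall>x\<in>set L. herm_pauli n (fst x)"
    "\<forall>x\<in>set L. \<forall>y\<in>set L. fst x * fst y = fst y * fst x"
    "herm_pauli n X" "\<forall>x\<in>set L. fst x * X = X * fst x"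
    "X \<notin> gen_group n (map fst L)" "- X \<notin> gen_group n (map fst L)"
  shows "mtr (PProd n (L @ [(X,c)])) = mtr (PProd n L) / 2"
proof -
  have cL: "\<forall>x\<in>set L. fst x \<in> carrier_mat (2^n) (2^n)" using assms(1) herm_carrier by auto
  have X: "X \<in> carrier_mat (2^n) (2^n)" using assms(3) herm_carrier by auto
  have P: "PProd n L \<in> carrier_mat (2^n) (2^n)" using cL by simp
  have "PProd n (L @ [(X,c)]) = PProd n L * proj n X c"
    using cL X by (simp add: Pi_append)
  then have "mtr (PProd n (L @ [(X,c)])) = mtr (proj n X c * PProd n L)"
    using P X by (simp add: mtr_comm[where A="PProd n L"])
  also have "\<dots> = (mtr (PProd n L) + sgnc c * mtr (X * PProd n L)) / 2"
    using mtr_proj[where S=X and X="PProd n L" and b=c] X P by simp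
  also have "mtr (X * PProd n L) = mtr (PProd n L * X)" using X P by (simp add: mtr_comm)
  also have "\<dots> = 0" using mtr_zero[OF assms] .
  finally show ?thesis by simp
qed

lemma not_anti_comm:
  assumes "herm_pauli n A" "herm_pauli n B" "\<not> anticommute A B"
  shows "A * B = B * A"
  using herm_comm_or_anti[OF assms(1,2)] assms(3) by (auto simp: anticommute_def)

lemma Inv_bcomm:
  assumes I: "Inv n S j" and hS: "herm_pauli n Sj"
    and g1: "Sj \<notin> gen_group n (map fst S)" and g2: "- Sj \<notin> gen_group n (map fst S)"
    and na: "\<forall>t<length S. \<not> anticommute (fst (S ! t)) Sj"
  shows "Inv n (S @ [(Sj, {j})]) (Suc j)"
proof -
  have h: "\<forall>x\<in>set S. herm_pauli n (fst x)" and c: "\<forall>x\<in>set S. \<forall>y\<in>set S. fst x * fst y = fst y * fst x"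
    and l: "\<forall>x\<in>set S. finite (snd x) \<and> snd x \<subseteq> {..<j}"
    and tr: "\<forall>bs. length bs = length S \<longrightarrow> mtr (PProd n (zip (map fst S) bs)) = 2^n / 2^(length S)"
    using I by (auto simp: Inv_def)
  have cm: "\<forall>x\<in>set S. fst x * Sj = Sj * fst x"
  proof
    fix x assume "x \<in> set S"
    then obtain t where t: "t < length S" "x = S ! t" by (auto simp: in_set_conv_nth)
    then show "fst x * Sj = Sj * fst x" using na h hS not_anti_comm by auto
  qed
  let ?S1 = "S @ [(Sj, {j})]"
  have h1: "\<forall>x\<in>set ?S1. herm_pauli n (fst x)" using h hS by auto
  have c1: "\<forall>x\<in>set ?S1. \<forall>y\<in>set ?S1. fst x * fst y = fst y * fst x"
  proof (intro ballI)
    fix x y assume x: "x \<in> set ?S1" and y: "y \<in> set ?S1"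
    show "fst x * fst y = fst y * fst x"
    proof (cases "x \<in> set S")
      case xS: True
      show ?thesis
      proof (cases "y \<in> set S")
        case True then show ?thesis using c xS by blast
      next
        case False then have "y = (Sj, {j})" using y by simp
        then show ?thesis using cm xS by simp
      qed
    next
      case False then have xe: "x = (Sj, {j})" using x by simp
      show ?thesis
      proof (cases "y \<in> set S")
        case True then show ?thesis using cm xe by simp
      next
        case False then have "y = (Sj, {j})" using y by simp
        then show ?thesis using xe by simp
      qed
    qed
  qed
  have l1: "\<forall>x\<in>set ?S1. finite (snd x) \<and> snd x \<subseteq> {..<Suc j}" using l by fastforce
  have tr1: "\<forall>bs. length bs = length ?S1 \<longrightarrow> mtr (PProd n (zip (map fst ?S1) bs)) = 2^n / 2^(length ?S1)"
  proof (intro allI impI)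
    fix bs :: "bit list" assume len: "length bs = length ?S1"
    define bs0 where "bs0 = butlast bs"
    define cc where "cc = last bs"
    have ne: "bs \<noteq> []" using len by auto
    have bs: "bs = bs0 @ [cc]" unfolding bs0_def cc_def using ne by simp
    have len0: "length bs0 = length S" unfolding bs0_def using len by simp
    let ?L = "zip (map fst S) bs0"
    have mf: "map fst ?L = map fst S" using len0 by simp
    have zz: "zip (map fst ?S1) bs = ?L @ [(Sj, cc)]" using bs len0 by simp
    have hL: "\<forall>x\<in>set ?L. herm_pauli n (fst x)" using h by (force dest: set_zip_leftD)
    have cL: "\<forall>x\<in>set ?L. \<forall>y\<in>set ?L. fst x * fst y = fst y * fst x" using c by (force dest: set_zip_leftD)
    have cmL: "\<forall>x\<in>set ?L. fst x * Sj = Sj * fst x" using cm by (force dest: set_zip_leftD)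
    have "mtr (PProd n (zip (map fst ?S1) bs)) = mtr (PProd n ?L) / 2"
      unfolding zz by (rule trace_append[OF hL cL hS cmL]) (use g1 g2 mf in auto)
    then show "mtr (PProd n (zip (map fst ?S1) bs)) = 2^n / 2^(length ?S1)"
      using tr len0 by simp
  qed
  show ?thesis using h1 c1 l1 tr1 unfolding Inv_def by blast
qed

lemma sgnl_snoc: "\<forall>x\<in>set S. snd x \<subseteq> {..<j} \<Longrightarrow>
  sgnl (w(j := b)) (S @ [(Sj, {j})]) = sgnl w S @ [(Sj, b)]"
  using sgnl_upd[of S j w b] by (simp add: sgnl_def)

lemma bcomm_kraus:
  assumes I: "Inv n S j" and hS: "herm_pauli n Sj"
    and na: "\<forall>t<length S. \<not> anticommute (fst (S ! t)) Sj"
    and K: "K \<in> carrier_mat (2^n) (2^n)"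
  shows "K * proj n Sj b * PProd n (sgnl w S) = K * PProd n (sgnl (w(j := b)) (S @ [(Sj, {j})]))"
proof -
  have h: "\<forall>x\<in>set S. herm_pauli n (fst x)" and l: "\<forall>x\<in>set S. finite (snd x) \<and> snd x \<subseteq> {..<j}"
    using I by (auto simp: Inv_def)
  have cS: "\<forall>x\<in>set (sgnl w S). fst x \<in> carrier_mat (2^n) (2^n)"
    using h herm_carrier unfolding sgnl_def by auto
  have X: "Sj \<in> carrier_mat (2^n) (2^n)" using hS herm_carrier by auto
  have P: "PProd n (sgnl w S) \<in> carrier_mat (2^n) (2^n)" using cS by simp
  have cm: "\<forall>x\<in>set S. fst x * Sj = Sj * fst x"
  proof
    fix x assume "x \<in> set S"
    then obtain t where t: "t < length S" "x = S ! t" by (auto simp: in_set_conv_nth)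
    then show "fst x * Sj = Sj * fst x" using na h hS not_anti_comm by auto
  qed
  have "\<forall>T\<in>fst ` set (sgnl w S). proj n Sj b * T = T * proj n Sj b"
  proof
    fix T assume "T \<in> fst ` set (sgnl w S)"
    then have "T \<in> fst ` set S" unfolding sgnl_def by force
    then have "T * Sj = Sj * T" "T \<in> carrier_mat (2^n) (2^n)" using cm h herm_carrier by auto
    then show "proj n Sj b * T = T * proj n Sj b" using comm_proj[where A=T and S=Sj and b=b] X by simp
  qed
  then have comm: "proj n Sj b * PProd n (sgnl w S) = PProd n (sgnl w S) * proj n Sj b"
    using Pi_commute[where A="proj n Sj b" and L="sgnl w S"] X cS by simp
  have "PProd n (sgnl (w(j := b)) (S @ [(Sj, {j})])) = PProd n (sgnl w S) * proj n Sj b"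
    using sgnl_snoc[of S j w b Sj] l cS X by (simp add: Pi_append)
  then show ?thesis using comm K X P by (simp add: cms)
qed

lemma comm_mult:
  fixes P X Y :: "complex mat"
  assumes "P \<in> carrier_mat (2^n) (2^n)" "X \<in> carrier_mat (2^n) (2^n)" "Y \<in> carrier_mat (2^n) (2^n)"
    "P * X = X * P" "P * Y = Y * P"
  shows "P * (X * Y) = (X * Y) * P"
proof -
  have "P * (X * Y) = (P * X) * Y" using massoc[of P X Y] assms by simp
  also have "\<dots> = (X * P) * Y" using assms(4) by simp
  also have "\<dots> = X * (P * Y)" using massoc[of X P Y] assms by simp
  also have "\<dots> = X * (Y * P)" using assms(5) by simp
  also have "\<dots> = (X * Y) * P" using massoc[of X Y P] assms by simp
  finally show ?thesis .
qed

lemma anti_anti_comm: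
  fixes T X S :: "complex mat"
  assumes "T \<in> carrier_mat (2^n) (2^n)" "X \<in> carrier_mat (2^n) (2^n)" "S \<in> carrier_mat (2^n) (2^n)"
    "T * S = - (S * T)" "X * S = - (S * X)"
  shows "(T * X) * S = S * (T * X)"
proof -
  have "(T * X) * S = T * (X * S)" using massoc[of T X S] assms by simp
  also have "\<dots> = T * (- (S * X))" using assms(5) by simp
  also have "\<dots> = - (T * (S * X))" using rneg[of T "S * X"] assms by simp
  also have "T * (S * X) = (T * S) * X" using massoc[of T S X] assms by simp
  also have "\<dots> = (- (S * T)) * X" using assms(4) by simp
  also have "\<dots> = - ((S * T) * X)" using lneg[of "S * T" X] assms by simp
  also have "(S * T) * X = S * (T * X)" using massoc[of S T X] assms by simp
  finally show ?thesis by simp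
qed

lemma Qanti:
  fixes T T' :: "complex mat"
  assumes "T \<in> carrier_mat (2^n) (2^n)" "T' \<in> carrier_mat (2^n) (2^n)" "T * T = 1\<^sub>m (2^n)"
  shows "proj n T s * proj n (T * T') (c + s) = proj n T s * proj n T' c"
proof -
  have Q: "proj n T s \<in> carrier_mat (2^n) (2^n)" using assms by simp
  have QT: "proj n T s * T = sgnc s \<cdot>\<^sub>m proj n T s" using proj_S[of T n s] assms by simp
  have "proj n T s * (T * T') = (proj n T s * T) * T'" using assms Q by (simp add: cms)
  also have "\<dots> = sgnc s \<cdot>\<^sub>m (proj n T s * T')" using QT assms Q by (simp add: cms)
  finally have e: "proj n T s * (T * T') = sgnc s \<cdot>\<^sub>m (proj n T s * T')" .
  have "proj n T s * proj n (T * T') (c + s) = (1/2) \<cdot>\<^sub>m (proj n T s + sgnc (c + s) \<cdot>\<^sub>m (proj n T s * (T * T')))"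
    using mult_proj_left[where A="proj n T s" and S="T * T'" and b="c+s"] assms Q by simp
  also have "\<dots> = (1/2) \<cdot>\<^sub>m (proj n T s + sgnc c \<cdot>\<^sub>m (proj n T s * T'))"
    by (simp only: e smult_smult_mat sgnc_add) (simp add: mult.assoc)
  also have "\<dots> = proj n T s * proj n T' c"
    using mult_proj_left[where A="proj n T s" and S="T'" and b="c"] assms Q by simp
  finally show ?thesis .
qed

lemma PbQPb:
  fixes T X :: "complex mat"
  assumes "T \<in> carrier_mat (2^n) (2^n)" "X \<in> carrier_mat (2^n) (2^n)" "X * X = 1\<^sub>m (2^n)"
    "T * X = - (X * T)"
  shows "proj n X b * proj n T s * proj n X b = (1/2) \<cdot>\<^sub>m proj n X b"
proof -
  let ?P = "proj n X b" and ?P' = "proj n X (b+1)"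
  have P: "?P \<in> carrier_mat (2^n) (2^n)" "?P' \<in> carrier_mat (2^n) (2^n)" using assms by auto
  have TP: "T * ?P = ?P' * T" using anti_proj[where A=T and S=X and b=b] assms by simp
  have PP': "?P * ?P' = 0\<^sub>m (2^n) (2^n)" using proj_orth[of X n b] assms by simp
  have PP: "?P * ?P = ?P" using proj_idem[of X n b] assms by simp
  have "proj n T s * ?P = (1/2) \<cdot>\<^sub>m (?P + sgnc s \<cdot>\<^sub>m (T * ?P))"
    using mult_proj_right[where A="?P" and S=T and b=s] assms P by simp
  then have "?P * proj n T s * ?P = ?P * ((1/2) \<cdot>\<^sub>m (?P + sgnc s \<cdot>\<^sub>m (?P' * T)))"
    using assms P TP by (simp add: cms)
  also have "\<dots> = (1/2) \<cdot>\<^sub>m (?P * ?P + sgnc s \<cdot>\<^sub>m ((?P * ?P') * T))"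
    using assms P by (simp add: cms)
  also have "\<dots> = (1/2) \<cdot>\<^sub>m (?P + sgnc s \<cdot>\<^sub>m 0\<^sub>m (2^n) (2^n))"
    using PP PP' assms P by simp
  also have "\<dots> = (1/2) \<cdot>\<^sub>m ?P"
    using P by (intro eq_matI) auto
  finally show ?thesis .
qed

lemma kraus_anti_abstract:
  fixes K P Q R :: "complex mat"
  assumes c: "K \<in> carrier_mat (2^n) (2^n)" "P \<in> carrier_mat (2^n) (2^n)" "Q \<in> carrier_mat (2^n) (2^n)"
      "R \<in> carrier_mat (2^n) (2^n)"
    and PQP: "P * Q * P = (1/2) \<cdot>\<^sub>m P" and RP: "R * P = P * R" and QR: "Q * R = R * Q"
  shows "(K * P * (Q * R) = 0\<^sub>m (2^n) (2^n)) = (K * (R * P) = 0\<^sub>m (2^n) (2^n))"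
proof
  assume z: "K * P * (Q * R) = 0\<^sub>m (2^n) (2^n)"
  have "K * P * (Q * R) * P = K * (P * Q * P) * R"
  proof -
    have "K * P * (Q * R) * P = K * (P * (Q * (R * P)))" using c by (simp add: cms)
    also have "\<dots> = K * (P * (Q * (P * R)))" using RP by simp
    also have "\<dots> = K * (P * Q * P) * R" using c by (simp add: cms)
    finally show ?thesis .
  qed
  also have "\<dots> = (1/2) \<cdot>\<^sub>m (K * (R * P))" using c PQP RP by (simp add: cms)
  finally have "(1/2) \<cdot>\<^sub>m (K * (R * P)) = 0\<^sub>m (2^n) (2^n)" using z c by simp
  then have "2 \<cdot>\<^sub>m ((1/2) \<cdot>\<^sub>m (K * (R * P))) = 0\<^sub>m (2^n) (2^n)" by (simp add: zero_smult_mat)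
  then show "K * (R * P) = 0\<^sub>m (2^n) (2^n)" by (simp add: smult_smult_mat)
next
  assume z: "K * (R * P) = 0\<^sub>m (2^n) (2^n)"
  have "K * P * (Q * R) = K * (P * (R * Q))" using c QR by (simp add: cms)
  also have "\<dots> = K * (R * P) * Q" using c RP by (simp add: cms)
  finally show "K * P * (Q * R) = 0\<^sub>m (2^n) (2^n)" using z c by simp
qed

definition gm :: "complex mat \<Rightarrow> complex mat \<Rightarrow> bit \<Rightarrow> complex mat \<times> bit \<Rightarrow> complex mat \<times> bit" where
  "gm T Sj s = (\<lambda>(T',c). if anticommute T' Sj then (T * T', c + s) else (T', c))"

lemma anti_replace:
  fixes L0 :: "(complex mat \<times> bit) list"
  assumes hT: "herm_pauli n T" and hL: "\<forall>x\<in>set L0. herm_pauli n (fst x) \<and> fst x * T = T * fst x"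
  shows "proj n T s * PProd n L0 = proj n T s * PProd n (map (gm T Sj s) L0)"
proof (rule Pi_replace)
  have T: "T \<in> carrier_mat (2^n) (2^n)" "T * T = 1\<^sub>m (2^n)" using hT herm_carrier herm_sq by auto
  have cL: "\<forall>x\<in>set L0. fst x \<in> carrier_mat (2^n) (2^n)" using hL herm_carrier by auto
  show "length L0 = length (map (gm T Sj s) L0)" by simp
  show "proj n T s \<in> carrier_mat (2^n) (2^n)" using T by simp
  show "\<forall>x\<in>set L0. fst x \<in> carrier_mat (2^n) (2^n)" using cL .
  show "\<forall>x\<in>set (map (gm T Sj s) L0). fst x \<in> carrier_mat (2^n) (2^n)"
    using cL T by (auto simp: gm_def split: prod.splits)
  show "\<forall>i<length L0. proj n T s * proj n (fst (L0 ! i)) (snd (L0 ! i)) =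
      proj n T s * proj n (fst (map (gm T Sj s) L0 ! i)) (snd (map (gm T Sj s) L0 ! i))"
  proof (intro allI impI)
    fix i assume i: "i < length L0"
    obtain T' c where e: "L0 ! i = (T', c)" by force
    have T': "T' \<in> carrier_mat (2^n) (2^n)" using cL i e nth_mem by fastforce
    show "proj n T s * proj n (fst (L0 ! i)) (snd (L0 ! i)) =
      proj n T s * proj n (fst (map (gm T Sj s) L0 ! i)) (snd (map (gm T Sj s) L0 ! i))"
      using i e Qanti[of T T' s c] T T' by (simp add: gm_def)
  qed
  show "\<forall>x\<in>set L0. proj n T s * proj n (fst x) (snd x) = proj n (fst x) (snd x) * proj n T s"
  proof
    fix x assume x: "x \<in> set L0"
    then have "fst x \<in> carrier_mat (2^n) (2^n)" "fst x * T = T * fst x" using hL cL by auto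
    then show "proj n T s * proj n (fst x) (snd x) = proj n (fst x) (snd x) * proj n T s"
      using proj_proj_comm[where S=T and T="fst x"] T by simp
  qed
  show "\<forall>x\<in>set (map (gm T Sj s) L0). proj n T s * proj n (fst x) (snd x) = proj n (fst x) (snd x) * proj n T s"
  proof
    fix x assume "x \<in> set (map (gm T Sj s) L0)"
    then obtain y where y: "y \<in> set L0" "x = gm T Sj s y" by auto
    obtain T' c where yc: "y = (T', c)" by force
    have T': "T' \<in> carrier_mat (2^n) (2^n)" "T' * T = T * T'" using hL cL y yc by auto
    have c1: "T * fst x = fst x * T"
    proof (cases "anticommute T' Sj")
      case True
      then have "fst x = T * T'" using y yc by (simp add: gm_def)
      then show ?thesis using comm_mult[of T T T'] T T' by simp
    next
      case False
      then have "fst x = T'" using y yc by (simp add: gm_def)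
      then show ?thesis using T' by simp
    qed
    have c2: "fst x \<in> carrier_mat (2^n) (2^n)" using y yc T T' by (auto simp: gm_def)
    show "proj n T s * proj n (fst x) (snd x) = proj n (fst x) (snd x) * proj n T s"
      using proj_proj_comm[where S=T and T="fst x"] T c1 c2 by simp
  qed
qed

lemma sgnl_caseb:
  fixes X :: alg_state
  assumes "\<forall>x\<in>set X. finite (snd x)" "finite KT"
  shows "sgnl w (map (\<lambda>(T',K'). if anticommute T' Sj then (T * T', symdiff KT K') else (T',K')) X)
    = map (gm T Sj (\<Sum>k\<in>KT. w k)) (sgnl w X)"
  using assms
proof (induction X)
  case Nil then show ?case by (simp add: sgnl_def)
next
  case (Cons a X)
  obtain T' K' where a: "a = (T', K')" by force
  have f: "finite K'" using Cons.prems a by auto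
  have "(\<Sum>k\<in>symdiff KT K'. w k) = (\<Sum>k\<in>K'. w k) + (\<Sum>k\<in>KT. w k)"
  proof -
    have "(\<Sum>k\<in>symdiff KT K'. w k) = (\<Sum>k\<in>KT. w k) + (\<Sum>k\<in>K'. w k)"
      unfolding symdiff_def by (rule sum_symdiff[OF Cons.prems(2) f])
    then show ?thesis by (simp only: add.commute)
  qed
  then show ?case using Cons by (simp add: sgnl_def gm_def a)
qed

lemma caseb_elem:
  fixes S :: alg_state
  assumes "y \<in> set (caseb_update S t Sj)"
  shows "\<exists>x\<in>set S. (anticommute (fst x) Sj \<and> y = (fst (S ! t) * fst x, symdiff (snd (S ! t)) (snd x)))
     \<or> (\<not> anticommute (fst x) Sj \<and> y = x)"
proof -
  obtain x where x: "x \<in> set (take t S @ drop (Suc t) S)"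
    "y = (\<lambda>(T',K'). if anticommute T' Sj then (fst (S ! t) * T', symdiff (snd (S ! t)) K') else (T',K')) x"
    using assms unfolding caseb_update_def by auto
  have xS: "x \<in> set S" using x(1) by (auto dest: in_set_takeD in_set_dropD)
  obtain T' K' where xe: "x = (T', K')" by force
  have "(anticommute (fst x) Sj \<and> y = (fst (S ! t) * fst x, symdiff (snd (S ! t)) (snd x)))
     \<or> (\<not> anticommute (fst x) Sj \<and> y = x)" using x(2) by (simp add: xe)
  then show ?thesis using xS by blast
qed

lemma caseb_props:
  fixes S :: alg_state
  assumes I: "Inv n S j" and hS: "herm_pauli n Sj" and t: "t < length S"
    and an: "anticommute (fst (S ! t)) Sj" and y: "y \<in> set (caseb_update S t Sj)"
  shows "herm_pauli n (fst y)" "fst y * fst (S ! t) = fst (S ! t) * fst y" "fst y * Sj = Sj * fst y"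
    "fst y \<in> gen_group n (map fst S)" "adj (fst y) \<in> gen_group n (map fst S)"
    "finite (snd y)" "snd y \<subseteq> {..<j}" "\<forall>z\<in>set S. fst y * fst z = fst z * fst y"
proof -
  have h: "\<forall>x\<in>set S. herm_pauli n (fst x)" and c: "\<forall>x\<in>set S. \<forall>y\<in>set S. fst x * fst y = fst y * fst x"
    and l: "\<forall>x\<in>set S. finite (snd x) \<and> snd x \<subseteq> {..<j}"
    using I by (auto simp: Inv_def)
  let ?T = "fst (S ! t)"
  have tS: "S ! t \<in> set S" using t by simp
  have hT: "herm_pauli n ?T" using h tS by auto
  have T: "?T \<in> carrier_mat (2^n) (2^n)" "?T * ?T = 1\<^sub>m (2^n)" using hT herm_carrier herm_sq by auto
  have X: "Sj \<in> carrier_mat (2^n) (2^n)" using hS herm_carrier by auto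
  have TSj: "?T * Sj = - (Sj * ?T)" using an by (simp add: anticommute_def)
  have Tgen: "?T \<in> gen_group n (map fst S)" using tS by (intro gen_group.gen) auto
  obtain x where x: "x \<in> set S" and cases: "(anticommute (fst x) Sj \<and> y = (?T * fst x, symdiff (snd (S ! t)) (snd x)))
     \<or> (\<not> anticommute (fst x) Sj \<and> y = x)" using caseb_elem[OF y] by blast
  have hx: "herm_pauli n (fst x)" using h x by auto
  have xc: "fst x \<in> carrier_mat (2^n) (2^n)" using hx herm_carrier by auto
  have xT: "fst x * ?T = ?T * fst x" using c x tS by blast
  have xgen: "fst x \<in> gen_group n (map fst S)" using x by (intro gen_group.gen) auto
  have lx: "finite (snd x)" "snd x \<subseteq> {..<j}" using l x by auto
  have lt: "finite (snd (S ! t))" "snd (S ! t) \<subseteq> {..<j}" using l tS by auto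
  have hy: "herm_pauli n (fst y)"
    using cases hx herm_mult[OF hT hx] xT by auto
  show "herm_pauli n (fst y)" using hy .
  show "fst y * ?T = ?T * fst y"
    using cases xT comm_mult[of ?T ?T "fst x"] T xc by auto
  show "fst y * Sj = Sj * fst y"
  proof (cases "anticommute (fst x) Sj")
    case True
    then have "fst y = ?T * fst x" using cases by auto
    moreover have "fst x * Sj = - (Sj * fst x)" using True by (simp add: anticommute_def)
    ultimately show ?thesis using anti_anti_comm[of ?T "fst x" Sj] T xc X TSj by simp
  next
    case False
    then have "fst y = fst x" using cases by auto
    then show ?thesis using not_anti_comm[OF hx hS False] by simp
  qed
  show yg: "fst y \<in> gen_group n (map fst S)"
    using cases xgen Tgen gen_group.mult by auto
  show "adj (fst y) \<in> gen_group n (map fst S)" using yg herm_adj[OF hy] by simp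
  show "finite (snd y)" using cases lx lt by (auto simp: symdiff_def)
  show "snd y \<subseteq> {..<j}" using cases lx lt by (auto simp: symdiff_def)
  show "\<forall>z\<in>set S. fst y * fst z = fst z * fst y"
  proof
    fix z assume z: "z \<in> set S"
    have zc: "fst z \<in> carrier_mat (2^n) (2^n)" using h z herm_carrier by auto
    have zT: "fst z * ?T = ?T * fst z" using c z tS by blast
    have zx: "fst z * fst x = fst x * fst z" using c z x by blast
    show "fst y * fst z = fst z * fst y"
    proof (cases "anticommute (fst x) Sj")
      case True
      then have "fst y = ?T * fst x" using cases by auto
      then show ?thesis using comm_mult[of "fst z" ?T "fst x"] zc T xc zT zx by simp
    next
      case False
      then have "fst y = fst x" using cases by auto
      then show ?thesis using zx by simp
    qed
  qed
qed

lemma caseb_pair_comm: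
  fixes S :: alg_state
  assumes I: "Inv n S j" and hS: "herm_pauli n Sj" and t: "t < length S"
    and an: "anticommute (fst (S ! t)) Sj" and y: "y \<in> set (caseb_update S t Sj)"
    and y': "y' \<in> set (caseb_update S t Sj)"
  shows "fst y * fst y' = fst y' * fst y"
proof -
  have h: "\<forall>x\<in>set S. herm_pauli n (fst x)" using I by (auto simp: Inv_def)
  let ?T = "fst (S ! t)"
  have tS: "S ! t \<in> set S" using t by simp
  have T: "?T \<in> carrier_mat (2^n) (2^n)" using h tS herm_carrier by auto
  obtain x where x: "x \<in> set S" and cases: "(anticommute (fst x) Sj \<and> y' = (?T * fst x, symdiff (snd (S ! t)) (snd x)))
     \<or> (\<not> anticommute (fst x) Sj \<and> y' = x)" using caseb_elem[OF y'] by blast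
  have xc: "fst x \<in> carrier_mat (2^n) (2^n)" using h x herm_carrier by auto
  have yc: "fst y \<in> carrier_mat (2^n) (2^n)" using caseb_props(1)[OF I hS t an y] herm_carrier by auto
  have yT: "fst y * ?T = ?T * fst y" using caseb_props(2)[OF I hS t an y] .
  have yx: "fst y * fst x = fst x * fst y" using caseb_props(8)[OF I hS t an y] x by blast
  show ?thesis
  proof (cases "anticommute (fst x) Sj")
    case True
    then have "fst y' = ?T * fst x" using cases by auto
    then show ?thesis using comm_mult[of "fst y" ?T "fst x"] yc T xc yT yx by simp
  next
    case False
    then have "fst y' = fst x" using cases by auto
    then show ?thesis using yx by simp
  qed
qed

lemma caseb_as_map:
  "caseb_update S t Sj = map (\<lambda>(T',K'). if anticommute T' Sj then (fst (S ! t) * T', symdiff (snd (S ! t)) K') else (T',K'))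
     (take t S @ drop (Suc t) S)"
  by (simp add: caseb_update_def)

lemma split_at_t: "t < length S \<Longrightarrow> S = take t S @ S ! t # drop (Suc t) S"
  by (simp add: id_take_nth_drop)

lemma Pi_QR:
  fixes S :: alg_state
  assumes I: "Inv n S j" and hS: "herm_pauli n Sj" and t: "t < length S"
    and an: "anticommute (fst (S ! t)) Sj"
  shows "PProd n (sgnl w S) = proj n (fst (S ! t)) (\<Sum>k\<in>snd (S ! t). w k) * PProd n (sgnl w (caseb_update S t Sj))"
proof -
  have h: "\<forall>x\<in>set S. herm_pauli n (fst x)" and c: "\<forall>x\<in>set S. \<forall>y\<in>set S. fst x * fst y = fst y * fst x"
    and l: "\<forall>x\<in>set S. finite (snd x) \<and> snd x \<subseteq> {..<j}"
    using I by (auto simp: Inv_def)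
  let ?T = "fst (S ! t)" and ?s = "\<Sum>k\<in>snd (S ! t). w k"
  let ?A = "take t S" and ?B = "drop (Suc t) S"
  have tS: "S ! t \<in> set S" using t by simp
  have hT: "herm_pauli n ?T" using h tS by auto
  have AB: "set (?A @ ?B) \<subseteq> set S" by (auto dest: in_set_takeD in_set_dropD)
  have e1: "sgnl w S = sgnl w ?A @ (?T, ?s) # sgnl w ?B"
    using split_at_t[OF t] unfolding sgnl_def by (metis (no_types, lifting) case_prod_beta list.simps(9) map_append)
  have cS: "\<forall>x\<in>set (sgnl w S). fst x \<in> carrier_mat (2^n) (2^n)" using h herm_carrier unfolding sgnl_def by auto
  have "PProd n (sgnl w S) = proj n (fst (?T, ?s)) (snd (?T, ?s)) * PProd n (sgnl w ?A @ sgnl w ?B)"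
  proof (subst e1, rule Pi_move)
    show "\<forall>x\<in>set (sgnl w ?A @ (?T, ?s) # sgnl w ?B). fst x \<in> carrier_mat (2^n) (2^n)"
      using cS e1 by simp
    show "\<forall>y\<in>set (sgnl w ?A). fst (?T, ?s) * fst y = fst y * fst (?T, ?s)"
    proof
      fix y assume "y \<in> set (sgnl w ?A)"
      then obtain z where "z \<in> set ?A" "fst y = fst z" unfolding sgnl_def by auto
      then show "fst (?T, ?s) * fst y = fst y * fst (?T, ?s)" using c tS by (auto dest: in_set_takeD)
    qed
  qed
  also have "sgnl w ?A @ sgnl w ?B = sgnl w (?A @ ?B)" by (simp add: sgnl_def)
  also have "proj n (fst (?T, ?s)) (snd (?T, ?s)) * PProd n (sgnl w (?A @ ?B))
      = proj n ?T ?s * PProd n (map (gm ?T Sj ?s) (sgnl w (?A @ ?B)))"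
  proof (simp only: fst_conv snd_conv, rule anti_replace[OF hT])
    show "\<forall>x\<in>set (sgnl w (?A @ ?B)). herm_pauli n (fst x) \<and> fst x * ?T = ?T * fst x"
    proof
      fix y assume "y \<in> set (sgnl w (?A @ ?B))"
      then obtain z where "z \<in> set (?A @ ?B)" "fst y = fst z" unfolding sgnl_def by fastforce
      then have "z \<in> set S" "fst y = fst z" using AB by auto
      then show "herm_pauli n (fst y) \<and> fst y * ?T = ?T * fst y" using h c tS by auto
    qed
  qed
  also have "map (gm ?T Sj ?s) (sgnl w (?A @ ?B)) = sgnl w (caseb_update S t Sj)"
    unfolding caseb_as_map
    by (rule sgnl_caseb[symmetric]) (use l AB tS in auto)
  finally show ?thesis .
qed

lemma banti_kraus:
  fixes S :: alg_state
  assumes I: "Inv n S j" and hS: "herm_pauli n Sj" and t: "t < length S"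
    and an: "anticommute (fst (S ! t)) Sj" and K: "K \<in> carrier_mat (2^n) (2^n)"
  shows "(K * proj n Sj b * PProd n (sgnl w S) = 0\<^sub>m (2^n) (2^n)) =
    (K * PProd n (sgnl (w(j := b)) (caseb_update S t Sj @ [(Sj, {j})])) = 0\<^sub>m (2^n) (2^n))"
proof -
  have h: "\<forall>x\<in>set S. herm_pauli n (fst x)" using I by (auto simp: Inv_def)
  let ?T = "fst (S ! t)" and ?s = "\<Sum>k\<in>snd (S ! t). w k"
  let ?C = "caseb_update S t Sj"
  let ?Q = "proj n ?T ?s" and ?R = "PProd n (sgnl w ?C)" and ?P = "proj n Sj b"
  have tS: "S ! t \<in> set S" using t by simp
  have hT: "herm_pauli n ?T" using h tS by auto
  have T: "?T \<in> carrier_mat (2^n) (2^n)" "?T * ?T = 1\<^sub>m (2^n)" using hT herm_carrier herm_sq by auto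
  have X: "Sj \<in> carrier_mat (2^n) (2^n)" "Sj * Sj = 1\<^sub>m (2^n)" using hS herm_carrier herm_sq by auto
  have props: "\<And>y. y \<in> set ?C \<Longrightarrow> herm_pauli n (fst y) \<and> fst y * ?T = ?T * fst y \<and> fst y * Sj = Sj * fst y
      \<and> snd y \<subseteq> {..<j}"
    using caseb_props[OF I hS t an] by blast
  have cC: "\<forall>x\<in>set (sgnl w ?C). fst x \<in> carrier_mat (2^n) (2^n)"
    using props herm_carrier unfolding sgnl_def by fastforce
  have R: "?R \<in> carrier_mat (2^n) (2^n)" using cC by simp
  have Q: "?Q \<in> carrier_mat (2^n) (2^n)" "?P \<in> carrier_mat (2^n) (2^n)" using T X by auto
  have eq1: "PProd n (sgnl w S) = ?Q * ?R" using Pi_QR[OF I hS t an] .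
  have eq2: "PProd n (sgnl (w(j := b)) (?C @ [(Sj, {j})])) = ?R * ?P"
  proof -
    have "\<forall>x\<in>set ?C. snd x \<subseteq> {..<j}" using props by blast
    then have "sgnl (w(j := b)) (?C @ [(Sj, {j})]) = sgnl w ?C @ [(Sj, b)]" by (rule sgnl_snoc)
    then show ?thesis using cC X by (simp add: Pi_append)
  qed
  have PQP: "?P * ?Q * ?P = (1/2) \<cdot>\<^sub>m ?P"
    using PbQPb[of ?T Sj b ?s] T X an by (simp add: anticommute_def)
  have RP: "?R * ?P = ?P * ?R"
  proof -
    have "\<forall>T'\<in>fst ` set (sgnl w ?C). ?P * T' = T' * ?P"
    proof
      fix T' assume "T' \<in> fst ` set (sgnl w ?C)"
      then obtain y where y: "y \<in> set ?C" "T' = fst y" unfolding sgnl_def by force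
      then have "T' * Sj = Sj * T'" "T' \<in> carrier_mat (2^n) (2^n)" using props[OF y(1)] herm_carrier by auto
      then show "?P * T' = T' * ?P" using comm_proj[where A=T' and S=Sj and b=b] X by simp
    qed
    then show ?thesis using Pi_commute[where A="?P" and L="sgnl w ?C"] Q cC by simp
  qed
  have QR: "?Q * ?R = ?R * ?Q"
  proof -
    have "\<forall>T'\<in>fst ` set (sgnl w ?C). ?Q * T' = T' * ?Q"
    proof
      fix T' assume "T' \<in> fst ` set (sgnl w ?C)"
      then obtain y where y: "y \<in> set ?C" "T' = fst y" unfolding sgnl_def by force
      then have "T' * ?T = ?T * T'" "T' \<in> carrier_mat (2^n) (2^n)" using props[OF y(1)] herm_carrier by auto
      then show "?Q * T' = T' * ?Q" using comm_proj[where A=T' and S="?T" and b="?s"] T by simp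
    qed
    then show ?thesis using Pi_commute[where A="?Q" and L="sgnl w ?C"] Q cC by simp
  qed
  have "(K * ?P * PProd n (sgnl w S) = 0\<^sub>m (2^n) (2^n)) = (K * ?P * (?Q * ?R) = 0\<^sub>m (2^n) (2^n))"
    using eq1 by simp
  also have "\<dots> = (K * (?R * ?P) = 0\<^sub>m (2^n) (2^n))"
    using kraus_anti_abstract[OF K Q(2) Q(1) R PQP RP QR] .
  finally show ?thesis using eq2 by simp
qed

lemma gm_zip:
  fixes X :: alg_state and bs :: "bit list"
  shows "length X = length bs \<Longrightarrow>
  map (gm T Sj s) (zip (map fst X) (map2 (\<lambda>x c. if anticommute (fst x) Sj then c + s else c) X bs))
  = zip (map fst (map (\<lambda>(T',K'). if anticommute T' Sj then (T * T', symdiff KT K') else (T',K')) X)) bs"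
proof (induction X bs rule: list_induct2)
  case Nil then show ?case by simp
next
  case (Cons x X c bs)
  obtain T' K' where x: "x = (T', K')" by force
  have hd: "gm T Sj s (fst x, if anticommute (fst x) Sj then c + s else c)
     = (fst ((\<lambda>(T',K'). if anticommute T' Sj then (T * T', symdiff KT K') else (T',K')) x), c)"
    by (cases "anticommute T' Sj") (simp_all only: gm_def x fst_conv prod.case if_True if_False add.assoc bit_add_self add_0_right)
  show ?case using Cons hd by simp
qed

lemma banti_trace:
  fixes S :: alg_state
  assumes I: "Inv n S j" and hS: "herm_pauli n Sj" and t: "t < length S"
    and an: "anticommute (fst (S ! t)) Sj" and len: "length bs0 = length S - 1"
  shows "mtr (PProd n (zip (map fst (caseb_update S t Sj)) bs0)) = 2 * (2^n / 2^(length S))"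
proof -
  have h: "\<forall>x\<in>set S. herm_pauli n (fst x)" and c: "\<forall>x\<in>set S. \<forall>y\<in>set S. fst x * fst y = fst y * fst x"
    and tr: "\<forall>bs. length bs = length S \<longrightarrow> mtr (PProd n (zip (map fst S) bs)) = 2^n / 2^(length S)"
    using I by (auto simp: Inv_def)
  let ?T = "fst (S ! t)"
  let ?A = "take t S" and ?B = "drop (Suc t) S"
  let ?C = "caseb_update S t Sj"
  let ?Z = "PProd n (zip (map fst ?C) bs0)"
  have tS: "S ! t \<in> set S" using t by simp
  have hT: "herm_pauli n ?T" using h tS by auto
  have T: "?T \<in> carrier_mat (2^n) (2^n)" using hT herm_carrier by auto
  have AB: "set (?A @ ?B) \<subseteq> set S" by (auto dest: in_set_takeD in_set_dropD)
  have lenAB: "length (?A @ ?B) = length S - 1" using t by simp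
  have props: "\<And>y. y \<in> set ?C \<Longrightarrow> herm_pauli n (fst y)"
    using caseb_props[OF I hS t an] by blast
  have cZ: "\<forall>x\<in>set (zip (map fst ?C) bs0). fst x \<in> carrier_mat (2^n) (2^n)"
    using props herm_carrier by (force dest: set_zip_leftD)
  have Z: "?Z \<in> carrier_mat (2^n) (2^n)" using cZ by simp
  have key: "mtr (proj n ?T s' * ?Z) = 2^n / 2^(length S)" for s'
  proof -
    define cs where "cs = map2 (\<lambda>x c. if anticommute (fst x) Sj then c + s' else c) (?A @ ?B) bs0"
    have lcs: "length cs = length S - 1" using len lenAB by (simp add: cs_def)
    define L0 where "L0 = zip (map fst (?A @ ?B)) cs"
    have c1: "map (gm ?T Sj s') L0 = zip (map fst ?C) bs0"
      unfolding L0_def cs_def caseb_as_map using gm_zip[of "?A @ ?B" bs0 ?T Sj s' "snd (S ! t)"] len lenAB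
      by simp
    define bsS where "bsS = take t cs @ s' # drop t cs"
    have lbs: "length bsS = length S" using lcs t by (simp add: bsS_def)
    have mS: "map fst S = map fst ?A @ ?T # map fst ?B"
      using split_at_t[OF t] by (metis list.simps(9) map_append)
    have ltA: "length (map fst ?A) = length (take t cs)" using t lcs by simp
    have z1: "zip (map fst S) bsS = zip (map fst ?A) (take t cs) @ (?T, s') # zip (map fst ?B) (drop t cs)"
      unfolding mS bsS_def using ltA by simp
    have z2: "zip (map fst ?A) (take t cs) @ zip (map fst ?B) (drop t cs) = L0"
      unfolding L0_def using ltA by (metis append_take_drop_id map_append zip_append)
    have cA: "\<forall>x\<in>set (zip (map fst ?A) (take t cs) @ (?T, s') # zip (map fst ?B) (drop t cs)). fst x \<in> carrier_mat (2^n) (2^n)"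
    proof -
      have "\<forall>x\<in>set (zip (map fst S) bsS). fst x \<in> carrier_mat (2^n) (2^n)"
        using h herm_carrier by (force dest: set_zip_leftD)
      then show ?thesis using z1 by simp
    qed
    have "PProd n (zip (map fst S) bsS) = proj n (fst (?T, s')) (snd (?T, s')) * PProd n L0"
      unfolding z1 z2[symmetric]
    proof (rule Pi_move[OF cA])
      show "\<forall>y\<in>set (zip (map fst ?A) (take t cs)). fst (?T, s') * fst y = fst y * fst (?T, s')"
      proof
        fix y assume "y \<in> set (zip (map fst ?A) (take t cs))"
        then have "fst y \<in> set (map fst ?A)" by (metis prod.collapse set_zip_leftD)
        then obtain z where "z \<in> set ?A" "fst y = fst z" by auto
        then show "fst (?T, s') * fst y = fst y * fst (?T, s')" using c tS by (auto dest: in_set_takeD)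
      qed
    qed
    also have "\<dots> = proj n ?T s' * PProd n (map (gm ?T Sj s') L0)"
    proof (simp only: fst_conv snd_conv, rule anti_replace[OF hT])
      show "\<forall>x\<in>set L0. herm_pauli n (fst x) \<and> fst x * ?T = ?T * fst x"
      proof
        fix y assume "y \<in> set L0"
        then have "fst y \<in> set (map fst (?A @ ?B))" unfolding L0_def by (metis prod.collapse set_zip_leftD)
        then obtain z where "z \<in> set (?A @ ?B)" "fst y = fst z" by auto
        then have "z \<in> set S" "fst y = fst z" using AB by auto
        then show "herm_pauli n (fst y) \<and> fst y * ?T = ?T * fst y" using h c tS by auto
      qed
    qed
    also have "\<dots> = proj n ?T s' * ?Z" using c1 by simp
    finally show ?thesis using tr lbs by metis
  qed
  have "?Z = proj n ?T 0 * ?Z + proj n ?T 1 * ?Z"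
  proof -
    have "proj n ?T 0 * ?Z + proj n ?T 1 * ?Z = (proj n ?T 0 + proj n ?T 1) * ?Z"
      using T Z by (simp add: cms)
    also have "\<dots> = ?Z" using proj_sum[of ?T n] T Z by simp
    finally show ?thesis by simp
  qed
  then have "mtr ?Z = mtr (proj n ?T 0 * ?Z) + mtr (proj n ?T 1 * ?Z)"
    using T Z by (metis mtr_add mult_c proj_carrier)
  then show ?thesis using key by simp
qed

lemma Inv_banti:
  fixes S :: alg_state
  assumes I: "Inv n S j" and hS: "herm_pauli n Sj" and t: "t < length S"
    and an: "anticommute (fst (S ! t)) Sj"
    and g1: "Sj \<notin> gen_group n (map fst S)" and g2: "- Sj \<notin> gen_group n (map fst S)"
  shows "Inv n (caseb_update S t Sj @ [(Sj, {j})]) (Suc j)"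
proof -
  let ?C = "caseb_update S t Sj"
  let ?S1 = "?C @ [(Sj, {j})]"
  have P: "\<And>y. y \<in> set ?C \<Longrightarrow> herm_pauli n (fst y) \<and> fst y * Sj = Sj * fst y \<and>
      fst y \<in> gen_group n (map fst S) \<and> adj (fst y) \<in> gen_group n (map fst S) \<and> finite (snd y) \<and> snd y \<subseteq> {..<j}"
    using caseb_props[OF I hS t an] by blast
  have PC: "\<And>y y'. y \<in> set ?C \<Longrightarrow> y' \<in> set ?C \<Longrightarrow> fst y * fst y' = fst y' * fst y"
    using caseb_pair_comm[OF I hS t an] by blast
  have lenC: "length ?C = length S - 1" using t by (simp add: caseb_update_def)
  have h1: "\<forall>x\<in>set ?S1. herm_pauli n (fst x)" using P hS by auto
  have c1: "\<forall>x\<in>set ?S1. \<forall>y\<in>set ?S1. fst x * fst y = fst y * fst x"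
  proof (intro ballI)
    fix x y assume x: "x \<in> set ?S1" and y: "y \<in> set ?S1"
    show "fst x * fst y = fst y * fst x"
    proof (cases "x \<in> set ?C")
      case xS: True
      show ?thesis
      proof (cases "y \<in> set ?C")
        case True then show ?thesis using PC xS by blast
      next
        case False then have "y = (Sj, {j})" using y by simp
        then show ?thesis using P xS by simp
      qed
    next
      case False then have xe: "x = (Sj, {j})" using x by simp
      show ?thesis
      proof (cases "y \<in> set ?C")
        case True then show ?thesis using P xe by simp
      next
        case False then have "y = (Sj, {j})" using y by simp
        then show ?thesis using xe by simp
      qed
    qed
  qed
  have l1: "\<forall>x\<in>set ?S1. finite (snd x) \<and> snd x \<subseteq> {..<Suc j}"
  proof
    fix x assume "x \<in> set ?S1"
    then have "x \<in> set ?C \<or> x = (Sj, {j})" by auto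
    then show "finite (snd x) \<and> snd x \<subseteq> {..<Suc j}" using P by fastforce
  qed
  have tr1: "\<forall>bs. length bs = length ?S1 \<longrightarrow> mtr (PProd n (zip (map fst ?S1) bs)) = 2^n / 2^(length ?S1)"
  proof (intro allI impI)
    fix bs :: "bit list" assume len: "length bs = length ?S1"
    define bs0 where "bs0 = butlast bs"
    define cc where "cc = last bs"
    have ne: "bs \<noteq> []" using len by auto
    have bs: "bs = bs0 @ [cc]" unfolding bs0_def cc_def using ne by simp
    have len0: "length bs0 = length ?C" unfolding bs0_def using len by simp
    let ?L = "zip (map fst ?C) bs0"
    have mf: "map fst ?L = map fst ?C" using len0 by simp
    have zz: "zip (map fst ?S1) bs = ?L @ [(Sj, cc)]" using bs len0 by simp
    have hL: "\<forall>x\<in>set ?L. herm_pauli n (fst x)" using P by (force dest: set_zip_leftD)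
    have cL: "\<forall>x\<in>set ?L. \<forall>y\<in>set ?L. fst x * fst y = fst y * fst x"
    proof (intro ballI)
      fix x y assume "x \<in> set ?L" "y \<in> set ?L"
      then have "fst x \<in> fst ` set ?C" "fst y \<in> fst ` set ?C"
        by (metis list.set_map prod.collapse set_zip_leftD)+
      then show "fst x * fst y = fst y * fst x" using PC by force
    qed
    have cmL: "\<forall>x\<in>set ?L. fst x * Sj = Sj * fst x" using P by (force dest: set_zip_leftD)
    have sub: "\<And>A. A \<in> gen_group n (map fst ?L) \<Longrightarrow> A \<in> gen_group n (map fst S)"
    proof -
      fix A assume "A \<in> gen_group n (map fst ?L)"
      then show "A \<in> gen_group n (map fst S)"
        by (rule gen_sub) (use P mf in force)
    qed
    have "mtr (PProd n (zip (map fst ?S1) bs)) = mtr (PProd n ?L) / 2"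
      unfolding zz by (rule trace_append[OF hL cL hS cmL]) (use g1 g2 sub in blast)+
    also have "mtr (PProd n ?L) = 2 * (2^n / 2^(length S))"
      using banti_trace[OF I hS t an] len0 lenC by simp
    moreover have "length ?S1 = length S" using lenC t by simp
    ultimately show "mtr (PProd n (zip (map fst ?S1) bs)) = 2^n / 2^(length ?S1)"
      by simp
  qed
  show ?thesis using h1 c1 l1 tr1 unfolding Inv_def by blast
qed

lemma Inv_mono_j: "Inv n S j \<Longrightarrow> Inv n S (Suc j)"
  unfolding Inv_def by fastforce

lemma foldr_symdiff_bound:
  fixes S :: alg_state
  shows "\<forall>x\<in>set S. snd x \<subseteq> {..<j} \<Longrightarrow> set xs \<subseteq> {..<length S} \<Longrightarrow>
   foldr (\<lambda>i K. (snd (S ! i) - K) \<union> (K - snd (S ! i))) xs {} \<subseteq> {..<j}"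
proof (induction xs)
  case Nil then show ?case by simp
next
  case (Cons a xs)
  then have "snd (S ! a) \<subseteq> {..<j}" using nth_mem by fastforce
  then show ?case using Cons by auto
qed

lemma sub_symdiff_bound:
  fixes S :: alg_state
  assumes "\<forall>x\<in>set S. snd x \<subseteq> {..<j}" "I \<subseteq> {..<length S}"
  shows "sub_symdiff S I \<subseteq> {..<j}"
proof -
  have "finite I" using assms(2) finite_subset by blast
  then have "set (sorted_list_of_set I) \<subseteq> {..<length S}" using assms(2) by simp
  then show ?thesis unfolding sub_symdiff_def using foldr_symdiff_bound[OF assms(1)] by blast
qed

lemma FS_Cons: "FS ((j, K, e) # R) = (if e then FS R else insert j (FS R))"
  unfolding FS_def by auto

lemma sat_Cons: "sat ((j, K, e) # R) w \<longleftrightarrow> w j + (\<Sum>k\<in>K. w k) = 0 \<and> sat R w"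
  unfolding sat_def by auto

lemma upd_at: "upd w j (b # os) j = b"
  by (simp add: upd_def)

lemma bit_eq_add: "((b::bit) + c = 0) = (b = c)"
  by (cases b; cases c) simp_all

lemma main:
  assumes "oca n C S j S' R"
  shows "valid_circuit n C \<Longrightarrow> Inv n S j \<Longrightarrow> length os = num_meas C \<Longrightarrow>
    (kraus n (flip_meas (FS R) j C) os * PProd n (sgnl w S) \<noteq> 0\<^sub>m (2^n) (2^n)) = sat R (upd w j os)"
  using assms
proof (induction arbitrary: w os rule: oca.induct)
  case (finished S j)
  then have "os = []" by simp
  have h: "\<forall>x\<in>set S. herm_pauli n (fst x)" using finished(2) by (simp add: Inv_def)
  have cL: "\<forall>x\<in>set (sgnl w S). fst x \<in> carrier_mat (2^n) (2^n)"
    using h herm_carrier unfolding sgnl_def by auto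
  have P: "PProd n (sgnl w S) \<in> carrier_mat (2^n) (2^n)" using cL by simp
  show ?case using Inv_Pi_nz[OF finished(2)] \<open>os = []\<close> P by (simp add: sat_def)
next
  case (unitary C U S j S' R)
  have vU: "clifford n U" and vC: "valid_circuit n C"
    using unitary.prems(1) by (auto simp: valid_circuit_def)
  have Uc: "U \<in> carrier_mat (2^n) (2^n)" "adj U \<in> carrier_mat (2^n) (2^n)"
    "U * adj U = 1\<^sub>m (2^n)" "adj U * U = 1\<^sub>m (2^n)"
    using vU by (auto simp: clifford_def unitary_on_def adj_def)
  let ?K = "kraus n (flip_meas (FS R) j C) os"
  have K: "?K \<in> carrier_mat (2^n) (2^n)" using kraus_carrier flip_opc valid_opc[OF vC] by blast
  have h: "\<forall>x\<in>set S. herm_pauli n (fst x)" using unitary.prems(2) by (simp add: Inv_def)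
  have cL: "\<forall>x\<in>set (sgnl w S). fst x \<in> carrier_mat (2^n) (2^n)"
    using h herm_carrier unfolding sgnl_def by auto
  have P: "PProd n (sgnl w S) \<in> carrier_mat (2^n) (2^n)" using cL by simp
  have e: "PProd n (sgnl w (map (\<lambda>(T, K). (U * T * adj U, K)) S)) = U * PProd n (sgnl w S) * adj U"
    using Pi_conj[OF Uc, of "sgnl w S"] cL by (simp add: sgnl_conj)
  have IH: "(?K * PProd n (sgnl w (map (\<lambda>(T, K). (U * T * adj U, K)) S)) \<noteq> 0\<^sub>m (2^n) (2^n)) = sat R (upd w j os)"
    using unitary.IH[OF vC Inv_unitary[OF unitary.prems(2) vU]] unitary.prems(3) by simp
  have "(kraus n (flip_meas (FS R) j (Gate U # C)) os * PProd n (sgnl w S) = 0\<^sub>m (2^n) (2^n))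
      = (?K * U * PProd n (sgnl w S) = 0\<^sub>m (2^n) (2^n))" by simp
  also have "\<dots> = (?K * (U * PProd n (sgnl w S) * adj U) = 0\<^sub>m (2^n) (2^n))"
    using unitary_step[OF K Uc(1,2) P Uc(3,4)] .
  finally show ?case using IH e by simp
next
  case (case_a Sj S I eps C j S' R)
  have hS: "herm_pauli n Sj" and vC: "valid_circuit n C"
    using case_a.prems(1) by (auto simp: valid_circuit_def)
  obtain b os' where os: "os = b # os'" and los: "length os' = num_meas C"
    using case_a.prems(3) by (cases os) auto
  have h: "\<forall>x\<in>set S. herm_pauli n (fst x)" and c: "\<forall>x\<in>set S. \<forall>y\<in>set S. fst x * fst y = fst y * fst x"
    and l: "\<forall>x\<in>set S. finite (snd x) \<and> snd x \<subseteq> {..<j}"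
    using case_a.prems(2) by (auto simp: Inv_def)
  have cS: "\<forall>x\<in>set S. fst x \<in> carrier_mat (2^n) (2^n)" using h herm_carrier by auto
  let ?KK = "sub_symdiff S I"
  let ?R' = "(j, ?KK, eps) # R"
  have idx: "\<forall>x\<in>set R. Suc j \<le> fst x" using oca_idx[OF case_a.hyps(4)] .
  have jF: "(j \<in> FS ?R') = (\<not> eps)"
    using idx unfolding FS_Cons by (auto simp: FS_def)
  have fl: "flip_meas (FS ?R') (Suc j) C = flip_meas (FS R) (Suc j) C"
    by (rule flip_cong) (auto simp: FS_Cons)
  have M: "(if j \<in> FS ?R' then - Sj else Sj) = sub_prod n S I"
    using jF case_a.hyps(3) by auto
  let ?K = "kraus n (flip_meas (FS R) (Suc j) C) os'"
  have K: "?K \<in> carrier_mat (2^n) (2^n)" using kraus_carrier flip_opc valid_opc[OF vC] by blast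
  have cL: "\<forall>x\<in>set (sgnl w S). fst x \<in> carrier_mat (2^n) (2^n)"
    using cS unfolding sgnl_def by auto
  have P: "PProd n (sgnl w S) \<in> carrier_mat (2^n) (2^n)" using cL by simp
  have Mc: "sub_prod n S I \<in> carrier_mat (2^n) (2^n)" using sub_prod_carrier[OF cS case_a.hyps(2)] .
  let ?c = "\<Sum>k\<in>?KK. w k"
  have eig: "sub_prod n S I * PProd n (sgnl w S) = sgnc ?c \<cdot>\<^sub>m PProd n (sgnl w S)"
    using sub_prod_eig[OF h c _ case_a.hyps(2)] l by blast
  have pe: "proj n (sub_prod n S I) b * PProd n (sgnl w S) = (if b = ?c then PProd n (sgnl w S) else 0\<^sub>m (2^n) (2^n))"
    using proj_eig[OF Mc P eig] .
  have lhs: "kraus n (flip_meas (FS ?R') j (Meas Sj # C)) os * PProd n (sgnl w S)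
      = ?K * (if b = ?c then PProd n (sgnl w S) else 0\<^sub>m (2^n) (2^n))"
  proof -
    have "kraus n (flip_meas (FS ?R') j (Meas Sj # C)) os * PProd n (sgnl w S)
        = ?K * proj n (sub_prod n S I) b * PProd n (sgnl w S)"
      by (simp only: flip_meas.simps kraus.simps os fl M)
    also have "\<dots> = ?K * (proj n (sub_prod n S I) b * PProd n (sgnl w S))"
      using K Mc P by (simp add: cms)
    finally show ?thesis using pe by simp
  qed
  have KKb: "?KK \<subseteq> {..<j}" using sub_symdiff_bound[OF _ case_a.hyps(2)] l by blast
  have s1: "(\<Sum>k\<in>?KK. upd w j os k) = ?c"
    using KKb by (intro sum.cong) (auto simp: upd_low)
  have IH: "(?K * PProd n (sgnl (w(j := b)) S) \<noteq> 0\<^sub>m (2^n) (2^n)) = sat R (upd (w(j := b)) (Suc j) os')"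
    using case_a.IH[OF vC Inv_mono_j[OF case_a.prems(2)] los] .
  have sg: "sgnl (w(j := b)) S = sgnl w S" using sgnl_upd l by blast
  have ua: "upd w j os j = b" by (simp add: os upd_at)
  have "sat ?R' (upd w j os) = (upd w j os j + (\<Sum>k\<in>?KK. upd w j os k) = 0 \<and> sat R (upd w j os))"
    by (rule sat_Cons)
  also have "\<dots> = (b + ?c = 0 \<and> sat R (upd w j os))" by (simp only: s1 ua)
  also have "\<dots> = ((b = ?c) \<and> sat R (upd (w(j := b)) (Suc j) os'))" by (simp only: bit_eq_add os upd_Cons)
  finally have "sat ?R' (upd w j os) = ((b = ?c) \<and> sat R (upd (w(j := b)) (Suc j) os'))" .
  then show ?case using lhs IH sg K by auto
next
  case (case_b_anti Sj S t C j S' R)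
  have hS: "herm_pauli n Sj" and vC: "valid_circuit n C"
    using case_b_anti.prems(1) by (auto simp: valid_circuit_def)
  obtain b os' where os: "os = b # os'" and los: "length os' = num_meas C"
    using case_b_anti.prems(3) by (cases os) auto
  have idx: "\<forall>x\<in>set R. Suc j \<le> fst x" using oca_idx[OF case_b_anti.hyps(5)] .
  have jF: "j \<notin> FS R" using idx by (auto simp: FS_def)
  let ?K = "kraus n (flip_meas (FS R) (Suc j) C) os'"
  have K: "?K \<in> carrier_mat (2^n) (2^n)" using kraus_carrier flip_opc valid_opc[OF vC] by blast
  have lhs: "kraus n (flip_meas (FS R) j (Meas Sj # C)) os * PProd n (sgnl w S) = ?K * proj n Sj b * PProd n (sgnl w S)"
    using jF by (simp add: os)
  have IH: "(?K * PProd n (sgnl (w(j := b)) (caseb_update S t Sj @ [(Sj, {j})])) \<noteq> 0\<^sub>m (2^n) (2^n))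
      = sat R (upd (w(j := b)) (Suc j) os')"
    using case_b_anti.IH[OF vC Inv_banti[OF case_b_anti.prems(2) hS case_b_anti.hyps(3,4,1,2)] los] .
  show ?case
    using banti_kraus[OF case_b_anti.prems(2) hS case_b_anti.hyps(3,4) K, of b w] lhs IH
    by (simp add: os upd_Cons)
next
  case (case_b_comm Sj S C j S' R)
  have hS: "herm_pauli n Sj" and vC: "valid_circuit n C"
    using case_b_comm.prems(1) by (auto simp: valid_circuit_def)
  obtain b os' where os: "os = b # os'" and los: "length os' = num_meas C"
    using case_b_comm.prems(3) by (cases os) auto
  have idx: "\<forall>x\<in>set R. Suc j \<le> fst x" using oca_idx[OF case_b_comm.hyps(4)] .
  have jF: "j \<notin> FS R" using idx by (auto simp: FS_def)
  let ?K = "kraus n (flip_meas (FS R) (Suc j) C) os'"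
  have K: "?K \<in> carrier_mat (2^n) (2^n)" using kraus_carrier flip_opc valid_opc[OF vC] by blast
  have lhs: "kraus n (flip_meas (FS R) j (Meas Sj # C)) os * PProd n (sgnl w S) = ?K * proj n Sj b * PProd n (sgnl w S)"
    using jF by (simp add: os)
  have IH: "(?K * PProd n (sgnl (w(j := b)) (S @ [(Sj, {j})])) \<noteq> 0\<^sub>m (2^n) (2^n))
      = sat R (upd (w(j := b)) (Suc j) os')"
    using case_b_comm.IH[OF vC Inv_bcomm[OF case_b_comm.prems(2) hS case_b_comm.hyps(1,2,3)] los] .
  show ?case
    using bcomm_kraus[OF case_b_comm.prems(2) hS case_b_comm.hyps(3) K, of b w] lhs IH
    by (simp add: os upd_Cons)
qed

lemma Inv_empty: "Inv n [] j"
  unfolding Inv_def by (simp add: mtr_one)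

lemma sqnorm_zero_iff: "(sqnorm v = 0) = (\<forall>i<dim_vec v. v $ i = 0)"
  unfolding sqnorm_def by (auto simp: sum_nonneg_eq_0_iff)

lemma outcome_nz:
  fixes K :: "complex mat"
  assumes K: "K \<in> carrier_mat (2^n) (2^n)"
  shows "(\<exists>\<psi>. unit_state n \<psi> \<and> sqnorm (K *\<^sub>v \<psi>) \<noteq> 0) = (K \<noteq> 0\<^sub>m (2^n) (2^n))"
proof
  assume "\<exists>\<psi>. unit_state n \<psi> \<and> sqnorm (K *\<^sub>v \<psi>) \<noteq> 0"
  then obtain \<psi> where p: "unit_state n \<psi>" "sqnorm (K *\<^sub>v \<psi>) \<noteq> 0" by blast
  show "K \<noteq> 0\<^sub>m (2^n) (2^n)"
  proof
    assume z: "K = 0\<^sub>m (2^n) (2^n)"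
    have "\<forall>i<dim_vec (K *\<^sub>v \<psi>). (K *\<^sub>v \<psi>) $ i = 0"
      using p(1) z by (auto simp: unit_state_def scalar_prod_def)
    then show False using p(2) sqnorm_zero_iff by blast
  qed
next
  assume nz: "K \<noteq> 0\<^sub>m (2^n) (2^n)"
  obtain r c where rc: "r < 2^n" "c < 2^n" "K $$ (r, c) \<noteq> 0"
  proof (rule ccontr)
    assume "\<not> thesis"
    then have "\<forall>r<2^n. \<forall>c<2^n. K $$ (r, c) = 0" using that by blast
    then have "K = 0\<^sub>m (2^n) (2^n)" using K by (intro eq_matI) auto
    then show False using nz by simp
  qed
  let ?\<psi> = "unit_vec (2^n) c :: complex vec"
  have u: "unit_state n ?\<psi>"
  proof -
    have "sqnorm ?\<psi> = (\<Sum>i<2^n. (cmod (if i = c then 1 else 0))^2)"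
      unfolding sqnorm_def by (intro sum.cong) (auto simp: unit_vec_def)
    also have "\<dots> = (\<Sum>i<2^n. if i = c then 1 else 0)" by (intro sum.cong) auto
    also have "\<dots> = 1" using rc(2) by simp
    finally show ?thesis unfolding unit_state_def by simp
  qed
  have "(K *\<^sub>v ?\<psi>) $ r = K $$ (r, c)"
  proof -
    have "(K *\<^sub>v ?\<psi>) $ r = (\<Sum>i\<in>{0..<2^n}. K $$ (r, i) * (if i = c then 1 else 0))"
      using K rc by (auto simp: scalar_prod_def intro!: sum.cong)
    also have "\<dots> = K $$ (r, c)" using rc(2) by (simp add: if_distrib cong: if_cong)
    finally show ?thesis .
  qed
  then have "sqnorm (K *\<^sub>v ?\<psi>) \<noteq> 0" using rc K sqnorm_zero_iff by fastforce
  then show "\<exists>\<psi>. unit_state n \<psi> \<and> sqnorm (K *\<^sub>v \<psi>) \<noteq> 0" using u by blast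
qed

end

lemma sat_zero: "sat R (\<lambda>_. 0)"
  unfolding sat_def by auto

lemma sat_add: "sat R f \<Longrightarrow> sat R g \<Longrightarrow> sat R (\<lambda>k. f k + g k)"
proof -
  assume f: "sat R f" and g: "sat R g"
  show ?thesis unfolding sat_def
  proof (intro ballI, clarify)
    fix j K e assume "(j, K, e) \<in> set R"
    then have "f j + (\<Sum>k\<in>K. f k) = 0" "g j + (\<Sum>k\<in>K. g k) = 0" using f g unfolding sat_def by auto
    moreover have "f j + g j + (\<Sum>k\<in>K. f k + g k) = (f j + (\<Sum>k\<in>K. f k)) + (g j + (\<Sum>k\<in>K. g k))"
      by (simp only: sum.distrib add.assoc add.left_commute)
    ultimately show "f j + g j + (\<Sum>k\<in>K. f k + g k) = 0" by (simp only: add_0_right)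
  qed
qed

lemma sat_scale: "sat R f \<Longrightarrow> sat R (\<lambda>k. c * f k)"
proof -
  assume f: "sat R f"
  show ?thesis unfolding sat_def
  proof (intro ballI, clarify)
    fix j K e assume "(j, K, e) \<in> set R"
    then have "f j + (\<Sum>k\<in>K. f k) = 0" using f unfolding sat_def by auto
    then have "c * (f j + (\<Sum>k\<in>K. f k)) = 0" by (simp only: mult_zero_right)
    moreover have "c * (f j + (\<Sum>k\<in>K. f k)) = c * f j + (\<Sum>k\<in>K. c * f k)"
      by (simp only: sum_distrib_left distrib_left)
    ultimately show "c * f j + (\<Sum>k\<in>K. c * f k) = 0" by metis
  qed
qed

lemma upd_add: "length u = m \<Longrightarrow> length v = m \<Longrightarrow>
  upd (\<lambda>_. 0) 1 (map2 (+) u v) = (\<lambda>k. upd (\<lambda>_. 0) 1 u k + upd (\<lambda>_. 0) 1 v k)"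
  by (rule ext) (auto simp: upd_def)

lemma upd_scale: "upd (\<lambda>_. 0) 1 (map ((*) c) v) = (\<lambda>k. c * upd (\<lambda>_. 0) 1 v k)"
  by (rule ext) (auto simp: upd_def)

lemma upd_zero: "upd (\<lambda>_. 0) 1 (replicate m 0) = (\<lambda>_. 0)"
  by (rule ext) (auto simp: upd_def)

theorem mainTheorem2:
  fixes n :: nat and C :: circuit and S' :: alg_state
    and R :: "(nat \<times> nat set \<times> bool) list"
  assumes "valid_circuit n C"
    and "oca n C [] 1 S' R"
  shows "is_subspace (num_meas C)
           (outcome_code n (flip_meas {j. \<exists>K. (j, K, False) \<in> set R} 1 C))"
proof -
  let ?C = "flip_meas {j. \<exists>K. (j, K, False) \<in> set R} 1 C"
  let ?m = "num_meas C"
  have FS: "{j. \<exists>K. (j, K, False) \<in> set R} = FS R" by (simp add: FS_def)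
  have code: "outcome_code n ?C = {os. length os = ?m \<and> sat R (upd (\<lambda>_. 0) 1 os)}"
    unfolding outcome_code_def outcome_prob_def num_meas_flip
  proof (rule Collect_cong)
    fix os :: "bit list"
    show "(length os = ?m \<and> (\<exists>\<psi>. unit_state n \<psi> \<and> sqnorm (kraus n ?C os *\<^sub>v \<psi>) \<noteq> 0)) =
        (length os = ?m \<and> sat R (upd (\<lambda>_. 0) 1 os))"
    proof (cases "length os = ?m")
      case False then show ?thesis by simp
    next
      case l: True
      have K: "kraus n ?C os \<in> carrier_mat (2^n) (2^n)" using kraus_carrier flip_opc valid_opc[OF assms(1)] by blast
      have "(\<exists>\<psi>. unit_state n \<psi> \<and> sqnorm (kraus n ?C os *\<^sub>v \<psi>) \<noteq> 0) = (kraus n ?C os \<noteq> 0\<^sub>m (2^n) (2^n))"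
        using outcome_nz[OF K] .
      also have "\<dots> = (kraus n (flip_meas (FS R) 1 C) os * PProd n (sgnl (\<lambda>_. 0) []) \<noteq> 0\<^sub>m (2^n) (2^n))"
        using K FS by (simp add: sgnl_def)
      also have "\<dots> = sat R (upd (\<lambda>_. 0) 1 os)"
        using main[OF assms(2) assms(1) Inv_empty l] .
      finally show ?thesis using l by simp
    qed
  qed
  show ?thesis unfolding is_subspace_def code
  proof (intro conjI ballI allI)
    show "replicate ?m 0 \<in> {os. length os = ?m \<and> sat R (upd (\<lambda>_. 0) 1 os)}"
      using sat_zero[of R] upd_zero[of ?m] by simp
  next
    fix u v assume u: "u \<in> {os. length os = ?m \<and> sat R (upd (\<lambda>_. 0) 1 os)}"
      and v: "v \<in> {os. length os = ?m \<and> sat R (upd (\<lambda>_. 0) 1 os)}"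
    then show "map2 (+) u v \<in> {os. length os = ?m \<and> sat R (upd (\<lambda>_. 0) 1 os)}"
      using upd_add[of u ?m v] sat_add by auto
  next
    fix c :: bit and v assume v: "v \<in> {os. length os = ?m \<and> sat R (upd (\<lambda>_. 0) 1 os)}"
    then show "map ((*) c) v \<in> {os. length os = ?m \<and> sat R (upd (\<lambda>_. 0) 1 os)}"
      using upd_scale[of c v] sat_scale by auto
  qed auto
qed

end
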